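(* Fix $\alpha\in(0,1]$, $\lambda,\mu,q>0$, $c_\alpha>0$, $k\ge1$, $a>0$, $b\ge0$, and let $W_q,Z_q,C_q,S,G,m_\alpha$ and $J_x$ be as in the context. Set $z(a,J_0)=\int_0^a(J_0-ky)\frac{\mu}{\alpha}e^{-\frac{\mu}{\alpha}y}dy=J_0(1-e^{-\frac{\mu}{\alpha}a})-k\,m_\alpha(a)$. Then: (1) For $0\le x\le b$, $J_x=\frac{W_q(x)}{W_q(b)}J_b+\Big(Z_q(x)-\frac{W_q(x)}{W_q(b)}Z_q(b)\Big)z(a,J_0)$; in particular, with $j_x=J_x-z(a,J_0)Z_q(x)$, one has $j_x=\frac{W_q(x)}{W_q(b)}j_b$ for $0\le x\le b$. (2) $J_x=0$ for $x<-a$; $J_x=kx+J_0$ for $x\in[-a,0]$; $J_x=kG(a,x)+J_0S(a,x)$ for $x\in(0,b]$; and $J_0=\frac{1-k\,\partial_bG(a,b)}{\partial_bS(a,b)}=\frac{1-k\,m_\alpha(a)C_q'(b)}{e^{-\frac{\mu}{\alpha}a}C_q'(b)+qW_q(b)}$.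
   Context: Let $N$ be a Poisson process with rate $\lambda$ and $U_i$ i.i.d. exponential claims with rate $\mu$ (mean $1/\mu$), independent of $N$; fix the retention $\alpha$ and consider the surplus $Y_t=x+c_\alpha t-\sum_{i=1}^{N_t}\alpha U_i$ (in the paper $c_\alpha=c-(1-\alpha)(1+\eta_2)\lambda\mu>0$). Consider the policy: whenever the reserve lies in $[-a,0)$ (initially or after a claim) capital is injected immediately to bring it back to $0$, at cost $k$ per unit; if a claim takes the reserve below $-a$, the company is ruined and everything stops; dividends are paid as soon as the reserve reaches the upper level $b$ (reflection at $b$). $J_x$ denotes the expected value, for initial reserve $x\le b$, of the discounted (rate $q$) dividends minus $k$ times the discounted capital injections up to ruin under this policy. Let $\kappa(\theta)=c_\alpha\theta-\frac{\alpha\lambda\theta}{\mu+\alpha\theta}$, let $\rho_-\le0\le\Phi_q$ be the roots of $\alpha c_\alpha\theta^2+(c_\alpha\mu-\alpha\lambda-\alpha q)\theta-\mu q=0$, $W_q(x)=\frac{(\alpha\Phi_q+\mu)e^{\Phi_qx}-(\alpha\rho_-+\mu)e^{\rho_-x}}{\alpha c_\alpha(\Phi_q-\rho_-)}$ for $x\ge0$, $Z_q(x)=1+q\int_0^xW_q(y)dy$, $C_q(x)=c_\alpha W_q(x)-Z_q(x)$, $m_\alpha(s)=\int_0^s y\frac{\mu}{\alpha}e^{-\frac{\mu}{\alpha}y}dy=\frac{1-e^{-\frac{\mu}{\alpha}s}(\frac{\mu}{\alpha}s+1)}{\mu/\alpha}$, $S(s,x)=e^{-\frac{\mu}{\alpha}s}C_q(x)+Z_q(x)$,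 $G(s,x)=m_\alpha(s)C_q(x)$. Derivatives in $b$ are right derivatives. *)

theory Defs
  imports "HOL-Probability.Probability"
begin

text \<open>Parameters: al = retention alpha, c = premium rate c_alpha, lam = Poisson rate lambda,
  mu = claim rate mu, q = discount rate.\<close>

definition Phi :: "real \<Rightarrow> real \<Rightarrow> real \<Rightarrow> real \<Rightarrow> real \<Rightarrow> real" where
  "Phi al c lam mu q =
     (let A = al * c; B = c * mu - al * lam - al * q in (- B + sqrt (B^2 + 4 * A * mu * q)) / (2 * A))"

definition rho :: "real \<Rightarrow> real \<Rightarrow> real \<Rightarrow> real \<Rightarrow> real \<Rightarrow> real" where
  "rho al c lam mu q =
     (let A = al * c; B = c * mu - al * lam - al * q in (- B - sqrt (B^2 + 4 * A * mu * q)) / (2 * A))"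

text \<open>Scale function W_q (the explicit formula, used for x >= 0 only).\<close>
definition Wq :: "real \<Rightarrow> real \<Rightarrow> real \<Rightarrow> real \<Rightarrow> real \<Rightarrow> real \<Rightarrow> real" where
  "Wq al c lam mu q x =
     (let P = Phi al c lam mu q; R = rho al c lam mu q in
      ((al * P + mu) * exp (P * x) - (al * R + mu) * exp (R * x)) / (al * c * (P - R)))"

definition Zq :: "real \<Rightarrow> real \<Rightarrow> real \<Rightarrow> real \<Rightarrow> real \<Rightarrow> real \<Rightarrow> real" where
  "Zq al c lam mu q x = 1 + q * integral {0..x} (Wq al c lam mu q)"

definition Cq :: "real \<Rightarrow> real \<Rightarrow> real \<Rightarrow> real \<Rightarrow> real \<Rightarrow> real \<Rightarrow> real" where
  "Cq al c lam mu q x = c * Wq al c lam mu q x - Zq al c lam mu q x"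

definition m_al :: "real \<Rightarrow> real \<Rightarrow> real \<Rightarrow> real" where
  "m_al al mu s = (1 - exp (- (mu / al) * s) * ((mu / al) * s + 1)) / (mu / al)"

definition Sfun :: "real \<Rightarrow> real \<Rightarrow> real \<Rightarrow> real \<Rightarrow> real \<Rightarrow> real \<Rightarrow> real \<Rightarrow> real" where
  "Sfun al c lam mu q s x = exp (- (mu / al) * s) * Cq al c lam mu q x + Zq al c lam mu q x"

definition Gfun :: "real \<Rightarrow> real \<Rightarrow> real \<Rightarrow> real \<Rightarrow> real \<Rightarrow> real \<Rightarrow> real \<Rightarrow> real" where
  "Gfun al c lam mu q s x = m_al al mu s * Cq al c lam mu q x"

text \<open>Sample space: omega n = (T_n, U_n), where T_n is the n-th interarrival time of the
  Poisson process (i.i.d. exponential with rate lam) and U_n is the n-th claim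
  (i.i.d. exponential with rate mu), all independent.\<close>
definition claim_space :: "real \<Rightarrow> real \<Rightarrow> (nat \<Rightarrow> real \<times> real) measure" where
  "claim_space lam mu =
     (\<Pi>\<^sub>M n\<in>UNIV. density lborel (exponential_density lam) \<Otimes>\<^sub>M density lborel (exponential_density mu))"

definition arrival :: "(nat \<Rightarrow> real \<times> real) \<Rightarrow> nat \<Rightarrow> real" where
  "arrival \<omega> n = (\<Sum>i<n. fst (\<omega> i))"

text \<open>Reserve just before a claim, after having started at y in [0,b] right after the previous
  claim and a waiting time T (reflection at b), and just after the claim of size U.\<close>
definition post_claim :: "real \<Rightarrow> real \<Rightarrow> real \<Rightarrow> real \<Rightarrow> real \<Rightarrow> real \<Rightarrow> real" where
  "post_claim al c b y T U = min b (y + c * T) - al * U"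

text \<open>Controlled reserve right after the n-th claim and the injection at that time
  (None = ruined).  Start: ruin if x < -a, injection up to 0 if x in [-a,0).\<close>
primrec state :: "real \<Rightarrow> real \<Rightarrow> real \<Rightarrow> real \<Rightarrow> real \<Rightarrow> (nat \<Rightarrow> real \<times> real) \<Rightarrow> nat \<Rightarrow> real option" where
  "state al c a b x \<omega> 0 = (if x < - a then None else Some (max 0 x))"
| "state al c a b x \<omega> (Suc n) =
     (case state al c a b x \<omega> n of
        None \<Rightarrow> None
      | Some y \<Rightarrow> (let z = post_claim al c b y (fst (\<omega> n)) (snd (\<omega> n)) in
                   if z < - a then None else Some (max 0 z)))"

text \<open>Discounted dividends paid during the inter-claim period starting at time s with reserve
  y in [0,b] and of length T: the reserve reaches b at time s + (b-y)/c and dividends are then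
  paid at rate c (reflection at b), i.e. c * integral of exp(-q t) over [s+(b-y)/c, s+T].\<close>
definition div_period :: "real \<Rightarrow> real \<Rightarrow> real \<Rightarrow> real \<Rightarrow> real \<Rightarrow> real \<Rightarrow> real" where
  "div_period c q b y s T =
     (let h = (b - y) / c in
      if h < T then c / q * (exp (- q * (s + h)) - exp (- q * (s + T))) else 0)"

definition injection :: "real \<Rightarrow> real \<Rightarrow> real" where
  "injection a z = (if - a \<le> z \<and> z < 0 then - z else 0)"

definition payoff :: "real \<Rightarrow> real \<Rightarrow> real \<Rightarrow> real \<Rightarrow> real \<Rightarrow> real \<Rightarrow> real \<Rightarrow> (nat \<Rightarrow> real \<times> real) \<Rightarrow> real" where
  "payoff al c q k a b x \<omega> =
     (if - a \<le> x \<and> x < 0 then - k * (- x) else 0)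
     + (\<Sum>n. case state al c a b x \<omega> n of
              None \<Rightarrow> 0
            | Some y \<Rightarrow>
                div_period c q b y (arrival \<omega> n) (fst (\<omega> n))
                - k * exp (- q * arrival \<omega> (Suc n))
                    * injection a (post_claim al c b y (fst (\<omega> n)) (snd (\<omega> n))))"

definition J :: "real \<Rightarrow> real \<Rightarrow> real \<Rightarrow> real \<Rightarrow> real \<Rightarrow> real \<Rightarrow> real \<Rightarrow> real \<Rightarrow> real \<Rightarrow> real" where
  "J al c lam mu q k a b x = integral\<^sup>L (claim_space lam mu) (payoff al c q k a b x)"

definition zfun :: "real \<Rightarrow> real \<Rightarrow> real \<Rightarrow> real \<Rightarrow> real \<Rightarrow> real" where
  "zfun al mu k a J0 = J0 * (1 - exp (- (mu / al) * a)) - k * m_al al mu a"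

end

theory Submission imports Defs begin


lemma div_split: "((u1::real)*y1 - u2*y2)/d = u1/d*y1 + (-u2)/d*y2"
  by (simp add: diff_divide_distrib)

lemma div_sum2: "(d::real) \<noteq> 0 \<Longrightarrow> p \<noteq> 0 \<Longrightarrow> r \<noteq> 0 \<Longrightarrow> x/d/p + y/d/r = (x*r + y*p)/(d*(p*r))"
  by (simp add: field_simps)

lemma neg_div_aux: "(x::real) \<noteq> 0 \<Longrightarrow> d \<noteq> 0 \<Longrightarrow> (-x)/d/x = -1/d"
  by (simp add: field_simps)

lemma aux3: "((x::real) + y/p)*(1/d) + (x + y/r)*(-1/d) = y*(1/p - 1/r)/d"
  by (cases "d = 0") (simp_all add: field_simps)

locale model =
  fixes al c lam mu q k a b :: real
  assumes al_pos: "0 < al" and al_le1: "al \<le> 1" and lam_pos: "0 < lam" and mu_pos: "0 < mu"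
    and q_pos: "0 < q" and c_pos: "0 < c" and k_ge1: "1 \<le> k" and a_pos: "0 < a" and b_nonneg: "0 \<le> b"
begin

abbreviation "P \<equiv> Phi al c lam mu q"
abbreviation "R \<equiv> rho al c lam mu q"

lemma roots:
  shows P_pos: "0 < P" and R_neg: "R < 0"
    and P_eq: "al*c*P^2 + (c*mu - al*lam - al*q)*P - mu*q = 0"
    and R_eq: "al*c*R^2 + (c*mu - al*lam - al*q)*R - mu*q = 0"
    and PR_prod: "P * R = - mu*q/(al*c)"
    and PR_diff: "0 < P - R"
proof -
  define A where "A = al*c"
  define B where "B = c * mu - al * lam - al * q"
  define s where "s = sqrt (B^2 + 4*A*mu*q)"
  have A: "0 < A" using al_pos c_pos by (simp add: A_def)
  have D: "B^2 < B^2 + 4*A*mu*q" using A mu_pos q_pos by simp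
  have D0: "0 \<le> B^2 + 4*A*mu*q" using D by (smt (verit) zero_le_power2)
  have s2: "s^2 = B^2 + 4*A*mu*q" unfolding s_def using D0 by simp
  have sB: "\<bar>B\<bar> < s" unfolding s_def using D
    by (metis real_sqrt_abs real_sqrt_less_mono)
  have Pd: "P = (-B + s)/(2*A)" unfolding Phi_def A_def B_def s_def Let_def by simp
  have Rd: "R = (-B - s)/(2*A)" unfolding rho_def A_def B_def s_def Let_def by simp
  show "0 < P" unfolding Pd using A sB by (auto intro!: divide_pos_pos)
  show "R < 0" unfolding Rd using A sB by (auto intro!: divide_neg_pos)
  have "A*P^2 + B*P - mu*q = 0"
  proof -
    have "A*P^2 + B*P - mu*q = (A*(-B+s)^2 + 2*A*B*(-B+s) - 4*mu*q*A^2)/(4*A^2)" unfolding Pd using A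
      by (simp add: power2_eq_square field_simps)
    also have "(A*(-B+s)^2 + 2*A*B*(-B+s) - 4*mu*q*A^2) = A*(s^2 - B^2 - 4*mu*q*A)" by (simp add: algebra_simps power2_eq_square)
    finally show ?thesis using s2 by (simp add: algebra_simps)
  qed
  then show "al*c*P^2 + (c*mu - al*lam - al*q)*P - mu*q = 0" by (simp add: A_def B_def)
  have "A*R^2 + B*R - mu*q = 0"
  proof -
    have "A*R^2 + B*R - mu*q = (A*(-B-s)^2 + 2*A*B*(-B-s) - 4*mu*q*A^2)/(4*A^2)" unfolding Rd using A
      by (simp add: power2_eq_square field_simps)
    also have "(A*(-B-s)^2 + 2*A*B*(-B-s) - 4*mu*q*A^2) = A*(s^2 - B^2 - 4*mu*q*A)" by (simp add: algebra_simps power2_eq_square)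
    finally show ?thesis using s2 by (simp add: algebra_simps)
  qed
  then show "al*c*R^2 + (c*mu - al*lam - al*q)*R - mu*q = 0" by (simp add: A_def B_def)
  have "P*R = (B^2 - s^2)/(4*A^2)" unfolding Pd Rd using A by (simp add: field_simps power2_eq_square)
  also have "... = - mu*q/A" using s2 A by (simp add: field_simps power2_eq_square)
  finally show "P * R = - mu*q/(al*c)" by (simp add: A_def)
  show "0 < P - R" unfolding Pd Rd using A sB by (simp add: field_simps)
qed


lemma R_gt: "0 < mu + al*R"
proof -
  have eqP: "al*c*P^2 + (c*mu - al*lam - al*q)*P - mu*q = 0" by (rule P_eq)
  have eqR: "al*c*R^2 + (c*mu - al*lam - al*q)*R - mu*q = 0" by (rule R_eq)
  define t where "t = - mu/al"
  have fact: "al*c*t^2 + (c*mu - al*lam - al*q)*t - mu*q = lam*mu"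
    unfolding t_def using al_pos by (simp add: field_simps power2_eq_square)
  have h2: "al*c*(P+R) = -(c*mu - al*lam - al*q)"
  proof -
    have "al*c*(P^2 - R^2) + (c*mu - al*lam - al*q)*(P - R) = 0" using eqP eqR by (simp add: algebra_simps)
    hence "(P - R)*(al*c*(P+R) + (c*mu - al*lam - al*q)) = 0" by (simp add: algebra_simps power2_eq_square)
    thus ?thesis using PR_diff by simp
  qed
  have h3: "al*c*(P*R) = - mu*q" using PR_prod al_pos c_pos by simp
  have fac: "al*c*x^2 + (c*mu - al*lam - al*q)*x - mu*q = al*c*(x - P)*(x - R)" for x
  proof -
    have "al*c*(x - P)*(x - R) = al*c*x^2 - (al*c*(P+R))*x + (al*c*(P*R))" by (simp add: algebra_simps power2_eq_square)
    also have "... = al*c*x^2 + (c*mu - al*lam - al*q)*x - mu*q" unfolding h2 h3 by (simp add: algebra_simps)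
    finally show ?thesis by simp
  qed
  have "0 < al*c*(t - P)*(t - R)" using fact fac[of t] lam_pos mu_pos by simp
  moreover have "t - P < 0"
  proof -
    have "0 < mu/al" using al_pos mu_pos by simp
    thus ?thesis unfolding t_def using P_pos by linarith
  qed
  moreover have "0 < al*c" using al_pos c_pos by simp
  ultimately have "t - R < 0"
    by (smt (verit, best) mult_pos_neg mult_neg_neg mult_pos_pos mult_nonneg_nonpos mult_nonpos_nonneg)
  thus ?thesis unfolding t_def using al_pos by (simp add: field_simps)
qed

lemma char_eq:
  assumes "th = P \<or> th = R"
  shows "(lam + q - c*th)*(mu + al*th) = lam*mu"
proof -
  have "al*c*th^2 + (c*mu - al*lam - al*q)*th - mu*q = 0" using assms P_eq R_eq by auto
  thus ?thesis by (simp add: algebra_simps power2_eq_square)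
qed

lemma char_pos:
  assumes "th = P \<or> th = R"
  shows "0 < lam + q - c*th" and "0 < mu + al*th"
proof -
  show h: "0 < mu + al*th" using assms R_gt P_pos al_pos mu_pos
    by (smt (verit) mult_pos_pos)
  have "(lam + q - c*th)*(mu + al*th) > 0" using char_eq[OF assms] lam_pos mu_pos by simp
  thus "0 < lam + q - c*th" using h zero_less_mult_pos2 by blast
qed

definition "wP = (al*P+mu)/(al*c*(P-R))"
definition "wR = -(al*R+mu)/(al*c*(P-R))"

lemma W_eq: "Wq al c lam mu q x = wP*exp(P*x) + wR*exp(R*x)"
proof -
  show ?thesis unfolding Wq_def wP_def wR_def Let_def by (rule div_split)
qed

lemma wP_pos: "0 < wP" and wR_neg: "wR < 0"
  unfolding wP_def wR_def using PR_diff al_pos c_pos R_gt P_pos mu_pos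
  by (auto intro!: divide_pos_pos divide_neg_pos simp: add_pos_pos)

lemma wPR_sum: "wP + wR = 1/c"
proof -
  have "wP + wR = (al*P+mu + -(al*R+mu))/(al*c*(P-R))" unfolding wP_def wR_def by (rule add_divide_distrib[symmetric])
  also have "... = (al*(P-R))/(al*c*(P-R))" by (simp add: algebra_simps)
  also have "... = 1/c" using PR_diff al_pos c_pos by simp
  finally show ?thesis .
qed

lemma wPR_q: "q*(wP/P + wR/R) = 1"
proof -
  have nz: "al*c*(P-R) \<noteq> 0" "P \<noteq> 0" "R \<noteq> 0" using PR_diff al_pos c_pos P_pos R_neg by auto
  have "wP/P + wR/R = ((al*P+mu)*R + (-(al*R+mu))*P)/(al*c*(P-R)*(P*R))"
    unfolding wP_def wR_def using nz by (rule div_sum2)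
  also have "... = (-mu*(P-R))/(al*c*(P-R)*(P*R))" by (simp add: algebra_simps)
  also have "... = -mu/(al*c*(P*R))" using nz by simp
  also have "... = -mu/(-mu*q)" using PR_prod al_pos c_pos by simp
  finally show ?thesis using mu_pos q_pos by simp
qed

lemma W_pos: "0 \<le> x \<Longrightarrow> 0 < Wq al c lam mu q x"
proof -
  assume x: "0 \<le> x"
  have "exp (R*x) \<le> exp (P*x)" using x P_pos R_neg by (simp add: mult_right_mono)
  hence "wP*exp(R*x) \<le> wP*exp(P*x)" using wP_pos by simp
  moreover have "0 < (wP + wR)*exp(R*x)" using wPR_sum c_pos by simp
  ultimately show ?thesis unfolding W_eq by (simp add: algebra_simps)
qed

lemma W0: "Wq al c lam mu q 0 = 1/c" unfolding W_eq using wPR_sum by simp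

definition "dW x = wP*P*exp(P*x) + wR*R*exp(R*x)"

lemma dW_pos: "0 < dW x"
proof -
  have "0 < wP*P" "0 < wR*R" using wP_pos wR_neg P_pos R_neg by (auto simp: mult_neg_neg)
  hence "0 < wP*P*exp(P*x)" "0 < wR*R*exp(R*x)" by simp_all
  thus ?thesis unfolding dW_def by simp
qed

lemma W_deriv: "(Wq al c lam mu q has_real_derivative dW x) (at x within S)"
  unfolding dW_def W_eq[abs_def]
  by (auto intro!: derivative_eq_intros)

definition "Zc x = 1 + q*(wP*(exp(P*x) - 1)/P + wR*(exp(R*x) - 1)/R)"

lemma Zc_deriv: "(Zc has_real_derivative q * Wq al c lam mu q x) (at x within S)"
  unfolding Zc_def W_eq using P_pos R_neg
  by (auto intro!: derivative_eq_intros simp: field_simps)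

lemma Z_eq: assumes "0 \<le> x" shows "Zq al c lam mu q x = Zc x"
proof -
  define f where "f x = wP*(exp(P*x) - 1)/P + wR*(exp(R*x) - 1)/R" for x
  have "(Wq al c lam mu q has_integral (f x - f 0)) {0..x}"
  proof (rule fundamental_theorem_of_calculus[OF assms])
    fix y assume "y \<in> {0..x}"
    show "(f has_vector_derivative Wq al c lam mu q y) (at y within {0..x})"
      unfolding f_def W_eq has_real_derivative_iff_has_vector_derivative[symmetric] using P_pos R_neg
      by (auto intro!: derivative_eq_intros simp: field_simps)
  qed
  hence "integral {0..x} (Wq al c lam mu q) = f x" by (simp add: integral_unique f_def)
  thus ?thesis unfolding Zq_def Zc_def f_def by simp
qed

lemma Z0: "Zq al c lam mu q 0 = 1" by (simp add: Z_eq Zc_def)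

lemma Z_deriv: "(Zq al c lam mu q has_real_derivative q * Wq al c lam mu q b) (at_right b)"
proof -
  have "(Zc has_real_derivative q * Wq al c lam mu q b) (at b within {b..b+1})" by (rule Zc_deriv)
  hence "(Zq al c lam mu q has_real_derivative q * Wq al c lam mu q b) (at b within {b..b+1})"
    by (rule has_field_derivative_transform_within[where d=1]) (use b_nonneg in \<open>auto simp: Z_eq\<close>)
  thus ?thesis using at_within_Icc_at_right[of b "b+1"] by simp
qed


definition "e0 = exp (- (mu / al) * a)"
definition "mm = m_al al mu a"
definition "Cp = c * dW b - q * Wq al c lam mu q b"
definition "den = e0 * Cp + q * Wq al c lam mu q b"
definition "F0 = (1 - k * mm * Cp) / den"
definition "zz = F0 * (1 - e0) - k * mm"
definition "Aco = c * (k * mm + F0 * e0)"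
definition "KP = Aco*wP + zz*q*wP/P"
definition "KR = Aco*wR + zz*q*wR/R"
definition "Fc x = KP*exp(P*x) + KR*exp(R*x)"
definition "LP = KP*mu/(mu+al*P)"
definition "LR = KR*mu/(mu+al*R)"

lemma e0_pos: "0 < e0" and e0_lt1: "e0 < 1"
  unfolding e0_def using mu_pos al_pos a_pos by auto

lemma den_pos: "0 < den"
proof -
  have "den = e0 * c * dW b + (1 - e0) * q * Wq al c lam mu q b" unfolding den_def Cp_def by (simp add: algebra_simps)
  moreover have "0 < e0 * c * dW b" using e0_pos c_pos dW_pos by simp
  moreover have "0 < (1 - e0) * q * Wq al c lam mu q b" using e0_lt1 q_pos W_pos b_nonneg by simp
  ultimately show ?thesis by simp
qed

lemma F0_eq: "F0 * den = 1 - k * mm * Cp"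
  unfolding F0_def using den_pos by simp

lemma zz_zfun: "zz = zfun al mu k a F0"
  unfolding zz_def zfun_def e0_def mm_def by simp

lemma Fc_AZ: "Fc x = Aco * Wq al c lam mu q x + zz * Zc x"
proof -
  have "Aco * Wq al c lam mu q x + zz * Zc x
     = KP*exp(P*x) + KR*exp(R*x) + zz*(1 - q*(wP/P + wR/R))"
    unfolding W_eq Zc_def KP_def KR_def using P_pos R_neg by (simp add: field_simps)
  thus ?thesis unfolding Fc_def wPR_q by simp
qed

lemma Fc_GS: assumes "0 \<le> x"
  shows "k * Gfun al c lam mu q a x + F0 * Sfun al c lam mu q a x = Fc x"
proof -
  have "k * Gfun al c lam mu q a x + F0 * Sfun al c lam mu q a x
      = (k*mm + F0*e0) * (c * Wq al c lam mu q x - Zq al c lam mu q x) + F0 * Zq al c lam mu q x"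
    unfolding Gfun_def Sfun_def Cq_def mm_def e0_def by (simp add: algebra_simps)
  also have "... = Aco * Wq al c lam mu q x + zz * Zq al c lam mu q x"
    unfolding Aco_def zz_def by (simp add: algebra_simps)
  finally show ?thesis using Fc_AZ Z_eq[OF assms] by simp
qed

lemma Fc0: "Fc 0 = F0"
proof -
  have "Fc 0 = Aco / c + zz" using Fc_AZ[of 0] W0 by (simp add: Zc_def)
  also have "Aco / c = k*mm + F0*e0" unfolding Aco_def using c_pos by simp
  finally show ?thesis unfolding zz_def by (simp add: algebra_simps)
qed

lemma dFc: "KP*P*exp(P*b) + KR*R*exp(R*b) = 1"
proof -
  have "KP*P*exp(P*b) + KR*R*exp(R*b) = Aco * dW b + zz * q * Wq al c lam mu q b"
    unfolding KP_def KR_def dW_def W_eq using P_pos R_neg by (simp add: field_simps)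
  also have "... = F0 * den + k * mm * Cp"
    unfolding Aco_def zz_def den_def Cp_def by (simp add: algebra_simps)
  also have "... = 1" using F0_eq by simp
  finally show ?thesis .
qed

lemma LP_char: "LP * lam = KP * (lam + q - c*P)" and LR_char: "LR * lam = KR * (lam + q - c*R)"
proof -
  have p: "0 < mu + al*P" and r: "0 < mu + al*R" using char_pos by auto
  have "LP * lam = KP * (lam*mu/(mu+al*P))" unfolding LP_def by simp
  also have "lam*mu/(mu+al*P) = lam + q - c*P" using char_eq[of P] p by (simp add: field_simps)
  finally show "LP * lam = KP * (lam + q - c*P)" .
  have "LR * lam = KR * (lam*mu/(mu+al*R))" unfolding LR_def by simp
  also have "lam*mu/(mu+al*R) = lam + q - c*R" using char_eq[of R] r by (simp add: field_simps)
  finally show "LR * lam = KR * (lam + q - c*R)" .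
qed

lemma zz_L: "zz = LP + LR"
proof -
  have p: "mu + al*P \<noteq> 0" and r: "mu + al*R \<noteq> 0" using char_pos(2)[of P] char_pos(2)[of R] by auto
  have nz: "al*c*(P-R) \<noteq> 0" "P \<noteq> 0" "R \<noteq> 0" using PR_diff al_pos c_pos P_pos R_neg by auto
  have a1: "wP/(mu+al*P) = 1/(al*c*(P-R))" unfolding wP_def using p by (simp add: add.commute)
  have a2: "wR/(mu+al*R) = -1/(al*c*(P-R))"
  proof -
    have "wR/(mu+al*R) = (-(mu+al*R))/(al*c*(P-R))/(mu+al*R)" unfolding wR_def by (simp only: add.commute)
    also have "... = -1/(al*c*(P-R))" by (rule neg_div_aux[OF r nz(1)])
    finally show ?thesis .
  qed
  have "LP + LR = mu*(KP/(mu+al*P) + KR/(mu+al*R))" unfolding LP_def LR_def by (simp add: field_simps)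
  also have "KP/(mu+al*P) = (Aco + zz*q/P) * (wP/(mu+al*P))" unfolding KP_def by (simp add: field_simps)
  also have "KR/(mu+al*R) = (Aco + zz*q/R) * (wR/(mu+al*R))" unfolding KR_def by (simp add: field_simps)
  also note a1 also note a2
  also have "(Aco + zz*q/P) * (1/(al*c*(P-R))) + (Aco + zz*q/R) * (-1/(al*c*(P-R)))
     = zz*q*(1/P - 1/R)/(al*c*(P-R))" by (rule aux3)
  also have "1/P - 1/R = -(P-R)/(P*R)" using nz by (simp add: field_simps)
  also have "zz*q*(-(P-R)/(P*R))/(al*c*(P-R)) = -zz*q/(al*c*(P*R))" using nz by (simp add: field_simps)
  also have "al*c*(P*R) = -mu*q" using PR_prod al_pos c_pos by simp
  finally show ?thesis using mu_pos q_pos by simp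
qed

end


lemma exp_tail:
  fixes h beta :: real
  assumes "0 < beta"
  shows "has_bochner_integral lborel (\<lambda>t. indicator {h<..} t * exp(-beta*t)) (exp(-beta*h)/beta)"
proof -
  let ?F = "\<lambda>t. - exp(-beta*t)/beta"
  have *: "((\<lambda>t. exp (- beta*t)) \<longlongrightarrow> 0) at_top"
    using assms
    by (auto intro!: exp_at_bot[THEN filterlim_compose] filterlim_tendsto_pos_mult_at_top filterlim_ident
             simp: filterlim_uminus_at_bot)
  have A: "set_integrable lborel (einterval (ereal h) \<infinity>) (\<lambda>t. exp(-beta*t))"
   and B: "(LBINT t=ereal h..\<infinity>. exp(-beta*t)) = 0 - (- exp(-beta*h)/beta)"
  proof -
    have d: "\<And>t. (?F has_real_derivative exp(-beta*t)) (at t)"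
    proof -
      fix t
      have bne: "beta \<noteq> 0" using assms by simp
      show "(?F has_real_derivative exp(-beta*t)) (at t)"
        by (rule derivative_eq_intros refl | use bne in simp)+
    qed
    have l1: "((?F \<circ> real_of_ereal) \<longlongrightarrow> - exp(-beta*h)/beta) (at_right (ereal h))"
      using assms by (auto simp: ereal_tendsto_simps intro!: tendsto_eq_intros)
    have l2: "((?F \<circ> real_of_ereal) \<longlongrightarrow> 0) (at_left \<infinity>)"
      unfolding ereal_tendsto_simps
      by (rule filterlim_compose[OF _ *]) (use assms in \<open>auto intro!: tendsto_eq_intros filterlim_ident\<close>)
    note r = interval_integral_FTC_nonneg[where F="?F" and f="\<lambda>t. exp(-beta*t)" and a="ereal h" and b=\<infinity>, OF _ d _ _ l1 l2]
    show "set_integrable lborel (einterval (ereal h) \<infinity>) (\<lambda>t. exp(-beta*t))" using r by auto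
    show "(LBINT t=ereal h..\<infinity>. exp(-beta*t)) = 0 - (- exp(-beta*h)/beta)" using r by auto
  qed
  have "integrable lborel (\<lambda>t. indicator {h<..} t * exp(-beta*t))"
    using A unfolding set_integrable_def einterval_eq_Ici by simp
  moreover have "(\<integral>t. indicator {h<..} t * exp(-beta*t) \<partial>lborel) = exp(-beta*h)/beta"
    using B unfolding interval_lebesgue_integral_def set_lebesgue_integral_def einterval_eq_Ici by simp
  ultimately show ?thesis by (simp add: has_bochner_integral_iff)
qed

context model begin

definition Ft :: "real \<Rightarrow> real" where
  "Ft z = (if z < -a then 0 else if z < 0 then k*z + F0 else Fc (min z b))"
definition "Hc w = LP*exp(P*w) + LR*exp(R*w)"

lemma Fc_meas[measurable]: "Fc \<in> borel_measurable borel"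
  unfolding Fc_def[abs_def] by measurable

lemma Ft_meas[measurable]: "Ft \<in> borel_measurable borel"
  unfolding Ft_def[abs_def] by measurable

lemma H_int:
  assumes w: "0 \<le> w" "w \<le> b"
  shows "(\<integral>u. Ft (w - al*u) \<partial>density lborel (exponential_density mu)) = Hc w"
proof -
  define c1 where "c1 = mu*KP/(mu+al*P)"
  define c2 where "c2 = mu*KR/(mu+al*R)"
  have pP: "0 < mu+al*P" and pR: "0 < mu+al*R" using char_pos(2)[of P] char_pos(2)[of R] by auto
  define g1 where "g1 u = mu*KP*exp(P*w - (mu+al*P)*u) + mu*KR*exp(R*w - (mu+al*R)*u)" for u
  define g2 where "g2 u = mu*exp(-u*mu)*(k*(w-al*u)+F0)" for u
  define G1 where "G1 u = -c1*exp(P*w - (mu+al*P)*u) - c2*exp(R*w - (mu+al*R)*u)" for u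
  define G2 where "G2 u = -exp(-u*mu)*(k*(w-al*u)+F0) + (k*al/mu)*exp(-u*mu)" for u
  have wa: "0 \<le> w/al" "w/al \<le> (w+a)/al" using w al_pos a_pos by (auto simp: divide_right_mono)
  have "(\<integral>u. Ft (w - al*u) \<partial>density lborel (exponential_density mu))
      = (\<integral>u. exponential_density mu u * Ft (w - al*u) \<partial>lborel)"
    by (subst integral_density) (auto simp: exponential_density_nonneg mu_pos)
  also have "... = (\<integral>u. g1 u * indicator {0..w/al} u + g2 u * indicator {w/al..(w+a)/al} u \<partial>lborel)"
  proof (rule integral_cong_AE)
    show "AE u in lborel. exponential_density mu u * Ft (w - al*u)
           = g1 u * indicator {0..w/al} u + g2 u * indicator {w/al..(w+a)/al} u"
      using AE_lborel_singleton[of "w/al"]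
    proof eventually_elim
      case (elim u)
      have iff1: "u < w/al \<longleftrightarrow> al*u < w" using al_pos by (simp add: pos_less_divide_eq mult.commute)
      have iff3: "w/al < u \<longleftrightarrow> w < al*u" using al_pos by (simp add: pos_divide_less_eq mult.commute)
      have iff2: "u \<le> (w+a)/al \<longleftrightarrow> al*u \<le> w + a" using al_pos by (simp add: pos_le_divide_eq mult.commute)
      show ?case
      proof (cases "u < 0")
        case True thus ?thesis using wa by (simp add: exponential_density_def indicator_def)
      next
        case u0: False
        show ?thesis
        proof (cases "u < w/al")
          case True
          have "0 \<le> al*u" using al_pos u0 by simp
          hence "0 < w - al*u" "w - al*u \<le> b" using iff1 True w by auto
          hence "Ft (w - al*u) = Fc (w - al*u)" unfolding Ft_def using a_pos by auto
          have e1: "exp (- u * mu) * exp (P * (w - al * u)) = exp(P*w - (mu+al*P)*u)"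
            "exp (- u * mu) * exp (R * (w - al * u)) = exp(R*w - (mu+al*R)*u)"
            by (simp_all add: exp_add[symmetric] algebra_simps)
          have "exponential_density mu u * Ft (w - al*u) = mu*exp(-u*mu)*(KP*exp(P*(w-al*u)) + KR*exp(R*(w-al*u)))"
            using u0 \<open>Ft (w - al*u) = Fc (w - al*u)\<close> by (simp add: exponential_density_def Fc_def)
          also have "... = mu*KP*(exp (- u * mu) * exp (P * (w - al * u))) + mu*KR*(exp (- u * mu) * exp (R * (w - al * u)))"
            by (simp add: algebra_simps)
          also have "... = g1 u" unfolding e1 g1_def by simp
          finally show ?thesis using True u0 wa by (simp add: indicator_def)
        next
          case False
          hence ne: "w/al < u" using elim by simp
          show ?thesis
          proof (cases "u \<le> (w+a)/al")
            case True
            hence "-a \<le> w - al*u" "w - al*u < 0" using iff1 iff2 iff3 ne by auto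
            hence "Ft (w - al*u) = k*(w-al*u) + F0" unfolding Ft_def by auto
            thus ?thesis using True ne u0 wa
              by (simp add: exponential_density_def indicator_def g2_def)
          next
            case False
            hence "w - al*u < -a" using iff2 by auto
            hence "Ft (w - al*u) = 0" unfolding Ft_def by auto
            thus ?thesis using False ne u0 wa
              by (simp add: exponential_density_def indicator_def)
          qed
        qed
      qed
    qed
  qed (auto simp: g1_def g2_def)
  also have "... = (\<integral>u. g1 u * indicator {0..w/al} u \<partial>lborel) + (\<integral>u. g2 u * indicator {w/al..(w+a)/al} u \<partial>lborel)"
    by (subst Bochner_Integration.integral_add) (auto intro!: borel_integrable_atLeastAtMost simp: g1_def g2_def)
  also have "(\<integral>u. g1 u * indicator {0..w/al} u \<partial>lborel) = G1 (w/al) - G1 0"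
  proof (rule integral_FTC_Icc_real)
    fix u
    have c1e: "c1*(mu+al*P) = mu*KP" and c2e: "c2*(mu+al*R) = mu*KR"
      unfolding c1_def c2_def using pP pR by auto
    have "(G1 has_real_derivative c1*(mu+al*P)*exp(P*w - (mu+al*P)*u) + c2*(mu+al*R)*exp(R*w-(mu+al*R)*u)) (at u)"
      unfolding G1_def by (auto intro!: derivative_eq_intros simp: algebra_simps)
    thus "(G1 has_real_derivative g1 u) (at u)" unfolding c1e c2e g1_def .
  qed (use wa in \<open>auto simp: g1_def\<close>)
  also have "(\<integral>u. g2 u * indicator {w/al..(w+a)/al} u \<partial>lborel) = G2 ((w+a)/al) - G2 (w/al)"
  proof (rule integral_FTC_Icc_real)
    fix u
    show "(G2 has_real_derivative g2 u) (at u)"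
      unfolding G2_def g2_def using mu_pos
      by (auto intro!: derivative_eq_intros simp: field_simps)
  qed (use wa in \<open>auto simp: g2_def\<close>)
  also have "G1 (w/al) - G1 0 = Hc w - (LP + LR) * exp(-mu*w/al)"
  proof -
    have "P*w - (mu+al*P)*(w/al) = -mu*w/al" "R*w - (mu+al*R)*(w/al) = -mu*w/al"
      using al_pos by (simp_all add: field_simps)
    thus ?thesis unfolding G1_def Hc_def c1_def c2_def LP_def LR_def by (simp add: algebra_simps)
  qed
  also have "G2 ((w+a)/al) - G2 (w/al) = zz * exp(-mu*w/al)"
  proof -
    define E where "E = exp(-mu*w/al)"
    have "exp (- ((w+a)/al) * mu) = E * e0" unfolding E_def e0_def
      using al_pos by (simp add: exp_add[symmetric] field_simps)
    moreover have "exp (- (w/al) * mu) = E" unfolding E_def by (simp add: algebra_simps)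
    moreover have "k*(w - al*((w+a)/al)) + F0 = F0 - k*a" "k*(w - al*(w/al)) + F0 = F0"
      using al_pos by (simp_all add: field_simps)
    ultimately have "G2 ((w+a)/al) - G2 (w/al) = -(E*e0)*(F0 - k*a) + (k*al/mu)*(E*e0) + E*F0 - (k*al/mu)*E"
      unfolding G2_def by simp
    also have "... = zz * E"
      unfolding zz_def mm_def m_al_def e0_def[symmetric] using al_pos mu_pos by (simp add: field_simps)
    finally show ?thesis unfolding E_def .
  qed
  finally show ?thesis using zz_L by simp
qed


end


context model begin

lemma Hc_meas[measurable]: "Hc \<in> borel_measurable borel"
  unfolding Hc_def[abs_def] by measurable

lemma div_meas[measurable]:
  assumes [measurable]: "f \<in> borel_measurable M" "g \<in> borel_measurable M" "h \<in> borel_measurable M"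
  shows "(\<lambda>x. div_period c q b (f x) (g x) (h x)) \<in> borel_measurable M"
  unfolding div_period_def Let_def by measurable

lemma T_int:
  assumes x: "0 \<le> x" "x \<le> b"
  shows "(\<integral>t. div_period c q b x 0 t + exp(-q*t) * Hc (min b (x + c*t)) \<partial>density lborel (exponential_density lam)) = Fc x"
proof -
  define h where "h = (b - x)/c"
  have h0: "0 \<le> h" unfolding h_def using x c_pos by simp
  have pP: "0 < lam + q - c*P" and pR: "0 < lam + q - c*R" using char_pos(1)[of P] char_pos(1)[of R] by auto
  define g3 where "g3 t = lam*LP*exp(P*x - (lam+q-c*P)*t) + lam*LR*exp(R*x - (lam+q-c*R)*t)" for t
  define G3 where "G3 t = - KP*exp(P*x - (lam+q-c*P)*t) - KR*exp(R*x - (lam+q-c*R)*t)" for t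
  define c1 where "c1 = lam*(c/q)*exp(-q*h)"
  define c2 where "c2 = lam*(Hc b - c/q)"
  have eq: "exponential_density lam t * (div_period c q b x 0 t + exp(-q*t) * Hc (min b (x + c*t)))
      = g3 t * indicator {0..h} t + (c1 * (indicator {h<..} t * exp(-lam*t)) + c2 * (indicator {h<..} t * exp(-(lam+q)*t)))" for t
  proof (cases "t < 0")
    case True thus ?thesis using h0 by (simp add: exponential_density_def indicator_def)
  next
    case t0: False
    show ?thesis
    proof (cases "t \<le> h")
      case True
      hence ct: "c*t \<le> b - x" unfolding h_def using c_pos by (simp add: pos_le_divide_eq mult.commute)
      hence mn: "min b (x + c*t) = x + c*t" by simp
      have dp: "div_period c q b x 0 t = 0" unfolding div_period_def Let_def h_def[symmetric] using True by simp
      have e1: "exp (- t * lam) * (exp (- q * t) * exp (P * (x + c * t))) = exp(P*x - (lam+q-c*P)*t)"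
               "exp (- t * lam) * (exp (- q * t) * exp (R * (x + c * t))) = exp(R*x - (lam+q-c*R)*t)"
        by (simp_all add: exp_add[symmetric] algebra_simps)
      have "exponential_density lam t * (div_period c q b x 0 t + exp(-q*t) * Hc (min b (x + c*t)))
          = lam*LP*(exp (- t * lam) * (exp (- q * t) * exp (P * (x + c * t))))
            + lam*LR*(exp (- t * lam) * (exp (- q * t) * exp (R * (x + c * t))))"
        unfolding mn dp Hc_def using t0 by (simp add: exponential_density_def algebra_simps)
      also have "... = g3 t" unfolding e1 g3_def by simp
      finally show ?thesis using True t0 by (simp add: indicator_def)
    next
      case False
      hence "(b - x)/c < t" unfolding h_def by simp
      hence ct: "b - x < c*t" using c_pos by (simp add: pos_divide_less_eq mult.commute)
      hence mn: "min b (x + c*t) = b" by simp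
      have dp: "div_period c q b x 0 t = c/q*(exp(-q*h) - exp(-q*t))"
        unfolding div_period_def Let_def h_def[symmetric] using False by simp
      have e2: "exp (- t * lam) * exp (- q * t) = exp(-(lam+q)*t)" by (simp add: exp_add[symmetric] algebra_simps)
      have "exponential_density lam t * (div_period c q b x 0 t + exp(-q*t) * Hc (min b (x + c*t)))
          = c1 * exp(-lam*t) + c2 * (exp (- t * lam) * exp (- q * t))"
        unfolding mn dp c1_def c2_def using t0 by (simp add: exponential_density_def algebra_simps)
      thus ?thesis unfolding e2 using False t0 by (simp add: indicator_def)
    qed
  qed
  have I1: "has_bochner_integral lborel (\<lambda>t. g3 t * indicator {0..h} t) (G3 h - G3 0)"
  proof (rule has_bochner_integral_FTC_Icc_real[OF h0])
    fix t
    have c1e: "KP*(lam+q-c*P) = lam*LP" and c2e: "KR*(lam+q-c*R) = lam*LR"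
      using LP_char LR_char by (simp_all add: mult.commute)
    have "(G3 has_real_derivative KP*(lam+q-c*P)*exp(P*x - (lam+q-c*P)*t) + KR*(lam+q-c*R)*exp(R*x - (lam+q-c*R)*t)) (at t)"
      unfolding G3_def by (auto intro!: derivative_eq_intros simp: algebra_simps)
    thus "(G3 has_real_derivative g3 t) (at t)" unfolding c1e c2e g3_def .
  qed (auto simp: g3_def)
  have I2: "has_bochner_integral lborel (\<lambda>t. c1 * (indicator {h<..} t * exp(-lam*t))) (c1 * (exp(-lam*h)/lam))"
    by (rule has_bochner_integral_mult_right[OF exp_tail[OF lam_pos]])
  have I3: "has_bochner_integral lborel (\<lambda>t. c2 * (indicator {h<..} t * exp(-(lam+q)*t))) (c2 * (exp(-(lam+q)*h)/(lam+q)))"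
    using has_bochner_integral_mult_right[OF exp_tail[of "lam+q" h]] lam_pos q_pos by simp
  have "has_bochner_integral lborel (\<lambda>t. exponential_density lam t * (div_period c q b x 0 t + exp(-q*t) * Hc (min b (x + c*t))))
          ((G3 h - G3 0) + (c1 * (exp(-lam*h)/lam) + c2 * (exp(-(lam+q)*h)/(lam+q))))"
    unfolding eq by (intro has_bochner_integral_add I1 I2 I3)
  hence "(\<integral>t. exponential_density lam t * (div_period c q b x 0 t + exp(-q*t) * Hc (min b (x + c*t))) \<partial>lborel)
         = (G3 h - G3 0) + (c1 * (exp(-lam*h)/lam) + c2 * (exp(-(lam+q)*h)/(lam+q)))"
    by (simp add: has_bochner_integral_iff)
  also have "... = Fc x"
  proof -
    define E where "E = exp(-(lam+q)*h)"
    have xb: "x + c*h = b" unfolding h_def using c_pos by simp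
    have "P*x - (lam+q-c*P)*h = P*(x+c*h) - (lam+q)*h" "R*x - (lam+q-c*R)*h = R*(x+c*h) - (lam+q)*h"
      by (simp_all add: algebra_simps)
    hence a1: "P*x - (lam+q-c*P)*h = P*b - (lam+q)*h" "R*x - (lam+q-c*R)*h = R*b - (lam+q)*h"
      unfolding xb by simp_all
    have x1: "exp(P*b - (lam+q)*h) = exp(P*b)*E" "exp(R*b - (lam+q)*h) = exp(R*b)*E"
      unfolding E_def by (simp_all add: exp_add[symmetric] algebra_simps)
    have g3h: "G3 h = - E * Fc b" unfolding G3_def a1 x1 Fc_def by (simp add: algebra_simps)
    have g30: "G3 0 = - Fc x" unfolding G3_def Fc_def by simp
    have c1v: "c1 * (exp(-lam*h)/lam) = (c/q) * E" unfolding c1_def E_def using lam_pos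
      by (simp add: exp_add[symmetric] algebra_simps)
    have lh: "lam * Hc b = (lam+q)*Fc b - c" 
    proof -
      have "lam * Hc b = (LP*lam)*exp(P*b) + (LR*lam)*exp(R*b)"
        unfolding Hc_def by (simp add: algebra_simps)
      also have "... = KP*(lam+q-c*P)*exp(P*b) + KR*(lam+q-c*R)*exp(R*b)"
        unfolding LP_char LR_char by simp
      also have "... = (lam+q)*Fc b - c*(KP*P*exp(P*b) + KR*R*exp(R*b))" unfolding Fc_def by (simp add: algebra_simps)
      finally show ?thesis using dFc by simp
    qed
    have "c2 = (lam+q)*(Fc b - c/q)"
    proof -
      have "c2 = (lam+q)*Fc b - c - lam*(c/q)" unfolding c2_def using lh by (simp add: algebra_simps)
      also have "c + lam*(c/q) = (lam+q)*(c/q)" using q_pos by (simp add: field_simps)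
      hence "(lam+q)*Fc b - c - lam*(c/q) = (lam+q)*(Fc b - c/q)" by (simp add: algebra_simps)
      finally show ?thesis .
    qed
    hence c2v: "c2 * (E/(lam+q)) = (Fc b - c/q)*E" using lam_pos q_pos by simp
    show ?thesis unfolding E_def[symmetric] g3h g30 c1v c2v by (simp add: algebra_simps)
  qed
  finally have "(\<integral>t. exponential_density lam t * (div_period c q b x 0 t + exp(-q*t) * Hc (min b (x + c*t))) \<partial>lborel) = Fc x" .
  moreover have "(\<integral>t. div_period c q b x 0 t + exp(-q*t) * Hc (min b (x + c*t)) \<partial>density lborel (exponential_density lam))
      = (\<integral>t. exponential_density lam t * (div_period c q b x 0 t + exp(-q*t) * Hc (min b (x + c*t))) \<partial>lborel)"
    by (subst integral_density) (auto simp: exponential_density_nonneg lam_pos)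
  ultimately show ?thesis by simp
qed

end


context model begin

abbreviation "MT \<equiv> density lborel (exponential_density lam)"
abbreviation "MU \<equiv> density lborel (exponential_density mu)"
abbreviation "M0 \<equiv> MT \<Otimes>\<^sub>M MU"

lemma MT_prob: "prob_space MT" using prob_space_exponential_density[OF lam_pos] .
lemma MU_prob: "prob_space MU" using prob_space_exponential_density[OF mu_pos] .
lemma M0_prob: "prob_space M0" by (intro prob_space_pair MT_prob MU_prob)

lemma pair_M0: "pair_prob_space MT MU"
  by (simp add: pair_prob_space.intro pair_sigma_finite.intro MT_prob MU_prob prob_space_imp_sigma_finite)

lemma AE_MT: "AE t in MT. 0 \<le> t"
  by (subst AE_density) (auto simp: exponential_density_def)
lemma AE_MU: "AE t in MU. 0 \<le> t"
  by (subst AE_density) (auto simp: exponential_density_def)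

lemma AE_M0: "AE s in M0. 0 \<le> fst s \<and> 0 \<le> snd s"
proof -
  interpret pair_prob_space MT MU by (rule pair_M0)
  show ?thesis
  proof (rule AE_pair_measure)
    show "{x \<in> space M0. 0 \<le> fst x \<and> 0 \<le> snd x} \<in> sets M0" by measurable
    show "AE x in MT. AE y in MU. 0 \<le> fst (x, y) \<and> 0 \<le> snd (x, y)"
      using AE_MT
    proof eventually_elim
      case (elim x)
      show ?case using AE_MU by eventually_elim (use elim in auto)
    qed
  qed
qed

definition "FtB = k*a + \<bar>F0\<bar> + \<bar>KP\<bar>*exp(P*b) + \<bar>KR\<bar>"

lemma Fc_bound: "0 \<le> y \<Longrightarrow> y \<le> b \<Longrightarrow> \<bar>Fc y\<bar> \<le> \<bar>KP\<bar>*exp(P*b) + \<bar>KR\<bar>"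
proof -
  assume y: "0 \<le> y" "y \<le> b"
  have "exp(P*y) \<le> exp(P*b)" using y P_pos by (simp add: mult_left_mono)
  moreover have "exp(R*y) \<le> 1" using y R_neg by (simp add: mult_nonpos_nonneg)
  ultimately have "\<bar>KP\<bar>*exp(P*y) \<le> \<bar>KP\<bar>*exp(P*b)" "\<bar>KR\<bar>*exp(R*y) \<le> \<bar>KR\<bar>*1"
    by (intro mult_left_mono; simp)+
  moreover have "\<bar>Fc y\<bar> \<le> \<bar>KP\<bar>*exp(P*y) + \<bar>KR\<bar>*exp(R*y)"
    unfolding Fc_def by (rule order_trans[OF abs_triangle_ineq]) (simp add: abs_mult)
  ultimately show ?thesis by linarith
qed

lemma Ft_bound: "\<bar>Ft z\<bar> \<le> FtB"
proof -
  have B0: "0 \<le> \<bar>KP\<bar>*exp(P*b) + \<bar>KR\<bar>" by simp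
  show ?thesis
  proof (cases "z < -a")
    case True thus ?thesis unfolding Ft_def FtB_def using k_ge1 a_pos B0 by simp
  next
    case False
    show ?thesis
    proof (cases "z < 0")
      case True
      have za: "\<bar>z\<bar> \<le> a" using False True by simp
      have "k*\<bar>z\<bar> \<le> k*a" by (rule mult_left_mono[OF za]) (use k_ge1 in simp)
      moreover have "\<bar>k*z + F0\<bar> \<le> \<bar>k*z\<bar> + \<bar>F0\<bar>" by (rule abs_triangle_ineq)
      moreover have "\<bar>k*z\<bar> = k*\<bar>z\<bar>" using k_ge1 by (simp add: abs_mult)
      moreover have "Ft z = k*z + F0" unfolding Ft_def using False True by simp
      ultimately show ?thesis unfolding FtB_def using B0 by linarith
    next
      case z0: False
      have "\<bar>Fc (min z b)\<bar> \<le> \<bar>KP\<bar>*exp(P*b) + \<bar>KR\<bar>" using z0 b_nonneg by (intro Fc_bound) auto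
      moreover have "Ft z = Fc (min z b)" unfolding Ft_def using False z0 by simp
      moreover have "0 \<le> k*a + \<bar>F0\<bar>" using k_ge1 a_pos by simp
      ultimately show ?thesis unfolding FtB_def by linarith
    qed
  qed
qed

lemma div_bound:
  assumes "y \<le> b" "0 \<le> tt" "0 \<le> ss"
  shows "0 \<le> div_period c q b y ss tt" "div_period c q b y ss tt \<le> c/q * exp(-q * ss)"
proof -
  define h where "h = (b-y)/c"
  have h0: "0 \<le> h" unfolding h_def using assms c_pos by simp
  show "0 \<le> div_period c q b y ss tt"
  proof (cases "h < tt")
    case True
    hence "exp(-q*(ss + tt)) \<le> exp(-q*(ss + h))" using q_pos by (simp add: mult_left_mono)
    hence "0 \<le> c/q*(exp(-q*(ss + h)) - exp(-q*(ss + tt)))" using c_pos q_pos by simp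
    thus ?thesis unfolding div_period_def Let_def h_def[symmetric] using True by simp
  qed (simp add: div_period_def Let_def h_def[symmetric])
  show "div_period c q b y ss tt \<le> c/q * exp(-q * ss)"
  proof (cases "h < tt")
    case True
    have "exp(-q*(ss + h)) \<le> exp(-q * ss)" using h0 q_pos by (simp add: algebra_simps mult_nonneg_nonneg)
    hence "exp(-q*(ss + h)) - exp(-q*(ss + tt)) \<le> exp(-q * ss)" by (smt (verit) exp_gt_zero)
    hence "c/q*(exp(-q*(ss + h)) - exp(-q*(ss + tt))) \<le> c/q * exp(-q * ss)"
      using c_pos q_pos by (intro mult_left_mono) auto
    thus ?thesis unfolding div_period_def Let_def h_def[symmetric] using True by simp
  next
    case False
    thus ?thesis unfolding div_period_def Let_def h_def[symmetric] using c_pos q_pos by simp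
  qed
qed

lemma F_fixed:
  assumes x: "0 \<le> x" "x \<le> b"
  shows "(\<integral>s. div_period c q b x 0 (fst s) + exp(-q*fst s) * Ft (post_claim al c b x (fst s) (snd s)) \<partial>M0) = Fc x"
proof -
  interpret pair_prob_space MT MU by (rule pair_M0)
  let ?f = "\<lambda>s. div_period c q b x 0 (fst s) + exp(-q*fst s) * Ft (post_claim al c b x (fst s) (snd s))"
  have meas: "?f \<in> borel_measurable M0" unfolding post_claim_def by measurable
  have intf: "integrable M0 ?f"
  proof (rule P.integrable_const_bound[where B="c/q + FtB"])
    show "AE s in M0. norm (?f s) \<le> c/q + FtB"
      using AE_M0
    proof eventually_elim
      case (elim s)
      have "0 \<le> div_period c q b x 0 (fst s)" "div_period c q b x 0 (fst s) \<le> c/q"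
        using div_bound[of x "fst s" 0] x elim by auto
      moreover have "\<bar>exp(-q*fst s) * Ft (post_claim al c b x (fst s) (snd s))\<bar> \<le> FtB"
      proof -
        have "exp(-q*fst s) \<le> 1" using elim q_pos by simp
        hence "\<bar>exp(-q*fst s)\<bar> * \<bar>Ft (post_claim al c b x (fst s) (snd s))\<bar> \<le> 1 * FtB"
          using Ft_bound by (intro mult_mono) auto
        thus ?thesis by (simp add: abs_mult)
      qed
      ultimately show ?case by simp
    qed
  qed (rule meas)
  have "(\<integral>s. ?f s \<partial>M0) = (\<integral>t. (\<integral>u. ?f (t,u) \<partial>MU) \<partial>MT)"
    using integral_fst'[OF intf] by simp
  also have "... = (\<integral>t. div_period c q b x 0 t + exp(-q*t) * Hc (min b (x + c*t)) \<partial>MT)"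
  proof (rule integral_cong_AE)
    show "AE t in MT. (\<integral>u. ?f (t,u) \<partial>MU) = div_period c q b x 0 t + exp(-q*t) * Hc (min b (x + c*t))"
      using AE_MT
    proof eventually_elim
      case (elim t)
      define w where "w = min b (x + c*t)"
      have w: "0 \<le> w" "w \<le> b" unfolding w_def using elim x c_pos b_nonneg by auto
      have iu: "integrable MU (\<lambda>u. Ft (w - al*u))"
        by (rule M2.integrable_const_bound[where B=FtB]) (auto simp: Ft_bound)
      have "(\<integral>u. ?f (t,u) \<partial>MU) = (\<integral>u. div_period c q b x 0 t + exp(-q*t) * Ft (w - al*u) \<partial>MU)"
        unfolding post_claim_def w_def by simp
      also have "... = div_period c q b x 0 t + exp(-q*t) * (\<integral>u. Ft (w - al*u) \<partial>MU)"
        using iu M2.prob_space by (simp add: Bochner_Integration.integral_add)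
      also have "(\<integral>u. Ft (w - al*u) \<partial>MU) = Hc w" using H_int[OF w] .
      finally show ?case unfolding w_def .
    qed
  qed (auto simp: post_claim_def)
  also have "... = Fc x" by (rule T_int[OF x])
  finally show ?thesis .
qed

end


context model begin

abbreviation "Om \<equiv> \<Pi>\<^sub>M i\<in>(UNIV::nat set). M0"

lemma claim_space_eq: "claim_space lam mu = Om" by (simp add: claim_space_def)

sublocale SS: sequence_space M0
  by (simp add: sequence_space_def product_prob_space_def product_sigma_finite_def
      product_prob_space_axioms_def M0_prob prob_space_imp_sigma_finite)

lemma pair_M0_Om: "pair_prob_space M0 Om"
  by (simp add: pair_prob_space.intro pair_sigma_finite.intro M0_prob SS.prob_space_axioms prob_space_imp_sigma_finite)

lemma fst_meas[measurable]: "(\<lambda>\<omega>. fst (\<omega> n)) \<in> borel_measurable Om"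
proof -
  have "(\<lambda>\<omega>. \<omega> n) \<in> measurable Om M0" by (rule measurable_component_singleton) simp
  moreover have "fst \<in> measurable M0 MT" by (rule measurable_fst)
  moreover have "(\<lambda>x. x) \<in> measurable MT borel" by (simp add: measurable_cong_sets[OF sets_density refl])
  ultimately have "(\<lambda>x. x) \<circ> fst \<circ> (\<lambda>\<omega>. \<omega> n) \<in> borel_measurable Om" by (intro measurable_comp)
  thus ?thesis by (simp add: comp_def)
qed

lemma snd_meas[measurable]: "(\<lambda>\<omega>. snd (\<omega> n)) \<in> borel_measurable Om"
proof -
  have "(\<lambda>\<omega>. \<omega> n) \<in> measurable Om M0" by (rule measurable_component_singleton) simp
  moreover have "snd \<in> measurable M0 MU" by (rule measurable_snd)
  moreover have "(\<lambda>x. x) \<in> measurable MU borel" by (simp add: measurable_cong_sets[OF sets_density refl])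
  ultimately have "(\<lambda>x. x) \<circ> snd \<circ> (\<lambda>\<omega>. \<omega> n) \<in> borel_measurable Om" by (intro measurable_comp)
  thus ?thesis by (simp add: comp_def)
qed

abbreviation "st x \<omega> n \<equiv> state al c a b x \<omega> n"

definition sval :: "real \<Rightarrow> (nat \<Rightarrow> real \<times> real) \<Rightarrow> nat \<Rightarrow> real" where
  "sval x \<omega> n = (case st x \<omega> n of None \<Rightarrow> 0 | Some y \<Rightarrow> y)"

lemma st_Suc_None: "st x \<omega> (Suc n) \<noteq> None \<longleftrightarrow>
   st x \<omega> n \<noteq> None \<and> \<not> post_claim al c b (sval x \<omega> n) (fst (\<omega> n)) (snd (\<omega> n)) < -a"
  by (cases "st x \<omega> n") (auto simp: sval_def Let_def)

lemma sval_Suc: "sval x \<omega> (Suc n) = (if st x \<omega> n \<noteq> None \<and> \<not> post_claim al c b (sval x \<omega> n) (fst (\<omega> n)) (snd (\<omega> n)) < -a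
   then max 0 (post_claim al c b (sval x \<omega> n) (fst (\<omega> n)) (snd (\<omega> n))) else 0)"
  by (cases "st x \<omega> n") (auto simp: sval_def Let_def)

lemma st_meas: "Measurable.pred Om (\<lambda>\<omega>. st x \<omega> n \<noteq> None) \<and> (\<lambda>\<omega>. sval x \<omega> n) \<in> borel_measurable Om"
proof (induction n)
  case 0
  show ?case by (simp add: sval_def)
next
  case (Suc n)
  hence [measurable]: "Measurable.pred Om (\<lambda>\<omega>. st x \<omega> n \<noteq> None)" "(\<lambda>\<omega>. sval x \<omega> n) \<in> borel_measurable Om" by auto
  show ?case unfolding st_Suc_None sval_Suc post_claim_def by (intro conjI; measurable)
qed

lemma st_pred[measurable]: "Measurable.pred Om (\<lambda>\<omega>. st x \<omega> n \<noteq> None)" using st_meas by blast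
lemma sval_meas[measurable]: "(\<lambda>\<omega>. sval x \<omega> n) \<in> borel_measurable Om" using st_meas by blast

lemma arrival_meas[measurable]: "(\<lambda>\<omega>. arrival \<omega> n) \<in> borel_measurable Om"
  unfolding arrival_def by measurable

definition trm :: "real \<Rightarrow> (nat \<Rightarrow> real \<times> real) \<Rightarrow> nat \<Rightarrow> real" where
  "trm x \<omega> n = (case st x \<omega> n of None \<Rightarrow> 0
            | Some y \<Rightarrow>
                div_period c q b y (arrival \<omega> n) (fst (\<omega> n))
                - k * exp (- q * arrival \<omega> (Suc n))
                    * injection a (post_claim al c b y (fst (\<omega> n)) (snd (\<omega> n))))"

definition init :: "real \<Rightarrow> real" where "init x = (if - a \<le> x \<and> x < 0 then - k * (- x) else 0)"

lemma payoff_eq: "payoff al c q k a b x \<omega> = init x + (\<Sum>n. trm x \<omega> n)"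
  unfolding payoff_def init_def trm_def by simp

lemma trm_alt: "trm x \<omega> n = (if st x \<omega> n \<noteq> None then
   div_period c q b (sval x \<omega> n) (arrival \<omega> n) (fst (\<omega> n))
                - k * exp (- q * arrival \<omega> (Suc n))
                    * injection a (post_claim al c b (sval x \<omega> n) (fst (\<omega> n)) (snd (\<omega> n))) else 0)"
  by (cases "st x \<omega> n") (auto simp: trm_def sval_def)

lemma injection_meas[measurable]: "(\<lambda>z. injection a z) \<in> borel_measurable borel"
  unfolding injection_def by measurable

lemma trm_meas[measurable]: "(\<lambda>\<omega>. trm x \<omega> n) \<in> borel_measurable Om"
  unfolding trm_alt post_claim_def by measurable

lemma payoff_meas[measurable]: "payoff al c q k a b x \<in> borel_measurable Om"
  unfolding payoff_eq[abs_def] by measurable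

end


context model begin

lemma st_shift:
  assumes "-a \<le> x"
  shows "st x (case_nat s \<omega>) (Suc n) = st (post_claim al c b (max 0 x) (fst s) (snd s)) \<omega> n"
proof (induction n)
  case 0
  show ?case using assms by (simp add: Let_def)
next
  case (Suc n)
  show ?case using Suc by (simp add: Let_def split: option.split)
qed

lemma arrival_shift: "arrival (case_nat s \<omega>) (Suc n) = fst s + arrival \<omega> n"
  unfolding arrival_def by (subst sum.lessThan_Suc_shift) simp

lemma arrival_0: "arrival \<omega> 0 = 0" unfolding arrival_def by simp

lemma div_shift: "div_period c q b y (t + A) T = exp(-q*t) * div_period c q b y A T"
  unfolding div_period_def Let_def by (simp add: algebra_simps exp_add[symmetric] right_diff_distrib)

lemma trm_shift:
  assumes "-a \<le> x"
  shows "trm x (case_nat s \<omega>) (Suc n) = exp(-q*fst s) * trm (post_claim al c b (max 0 x) (fst s) (snd s)) \<omega> n"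
proof -
  have e: "exp (- q * (fst s + A)) = exp(-q*fst s) * exp(-q*A)" for A
    by (simp add: exp_add[symmetric] algebra_simps)
  show ?thesis
    unfolding trm_def st_shift[OF assms] arrival_shift
    by (simp add: arrival_shift[of s \<omega> "Suc n", simplified] div_shift e algebra_simps mult_exp_exp split: option.split)
qed

lemma trm_0:
  assumes "-a \<le> x"
  shows "trm x (case_nat s \<omega>) 0 = div_period c q b (max 0 x) 0 (fst s)
     - k * exp(-q*fst s) * injection a (post_claim al c b (max 0 x) (fst s) (snd s))"
  using assms unfolding trm_def by (simp add: arrival_def)

lemma init_inj: "init z = - k * injection a z"
  unfolding init_def injection_def by auto

lemma payoff_shift:
  assumes x: "-a \<le> x" and sm: "summable (trm (post_claim al c b (max 0 x) (fst s) (snd s)) \<omega>)"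
  shows "payoff al c q k a b x (case_nat s \<omega>) = init x + div_period c q b (max 0 x) 0 (fst s)
     + exp(-q*fst s) * payoff al c q k a b (post_claim al c b (max 0 x) (fst s) (snd s)) \<omega>"
proof -
  define z where "z = post_claim al c b (max 0 x) (fst s) (snd s)"
  have sh: "(\<lambda>n. trm x (case_nat s \<omega>) (Suc n)) = (\<lambda>n. exp(-q*fst s) * trm z \<omega> n)"
    using trm_shift[OF x] unfolding z_def by auto
  have sm2: "summable (\<lambda>n. trm x (case_nat s \<omega>) (Suc n))" unfolding sh
    using sm unfolding z_def by (rule summable_mult)
  hence sm3: "summable (trm x (case_nat s \<omega>))" by (simp add: summable_Suc_iff)
  have "(\<Sum>n. trm x (case_nat s \<omega>) n) = trm x (case_nat s \<omega>) 0 + (\<Sum>n. trm x (case_nat s \<omega>) (Suc n))"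
    using suminf_split_head[OF sm3] by simp
  also have "(\<Sum>n. trm x (case_nat s \<omega>) (Suc n)) = exp(-q*fst s) * (\<Sum>n. trm z \<omega> n)"
    unfolding sh using sm unfolding z_def by (rule suminf_mult)
  finally show ?thesis unfolding payoff_eq trm_0[OF x] z_def[symmetric] init_inj[of z]
    by (simp add: algebra_simps)
qed

definition nice :: "(nat \<Rightarrow> real \<times> real) \<Rightarrow> bool" where
  "nice \<omega> \<longleftrightarrow> (\<forall>n. 0 \<le> fst (\<omega> n) \<and> 0 \<le> snd (\<omega> n)) \<and> summable (\<lambda>n. exp(-q*arrival \<omega> n))"

lemma nice_shift:
  assumes "nice (case_nat s \<omega>)"
  shows "0 \<le> fst s" "0 \<le> snd s" "nice \<omega>"
proof -
  have h: "\<forall>n. 0 \<le> fst (case_nat s \<omega> n) \<and> 0 \<le> snd (case_nat s \<omega> n)"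
    and sm: "summable (\<lambda>n. exp(-q*arrival (case_nat s \<omega>) n))" using assms unfolding nice_def by auto
  show "0 \<le> fst s" "0 \<le> snd s" using h[rule_format, of 0] by auto
  have "\<forall>n. 0 \<le> fst (\<omega> n) \<and> 0 \<le> snd (\<omega> n)" using h by (metis nat.simps(5))
  moreover have "summable (\<lambda>n. exp(-q*arrival \<omega> n))"
  proof -
    have "summable (\<lambda>n. exp(-q*arrival (case_nat s \<omega>) (Suc n)))"
      using summable_Suc_iff[of "\<lambda>n. exp(-q*arrival (case_nat s \<omega>) n)", THEN iffD2, OF sm] .
    hence X: "summable (\<lambda>n. exp(q*fst s) * exp(-q*arrival (case_nat s \<omega>) (Suc n)))" by (rule summable_mult)
    have eqfun: "(\<lambda>n. exp(q*fst s) * exp(-q*arrival (case_nat s \<omega>) (Suc n))) = (\<lambda>n. exp(-q*arrival \<omega> n))"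
      unfolding arrival_shift by (rule ext) (simp add: exp_add[symmetric] algebra_simps)
    show ?thesis using X by (simp only: eqfun)
  qed
  ultimately show "nice \<omega>" unfolding nice_def by auto
qed

lemma arrival_nonneg: "\<forall>i. 0 \<le> fst (\<omega> i) \<Longrightarrow> 0 \<le> arrival \<omega> n"
  unfolding arrival_def by (simp add: sum_nonneg)

lemma arrival_mono: "\<forall>i. 0 \<le> fst (\<omega> i) \<Longrightarrow> arrival \<omega> n \<le> arrival \<omega> (Suc n)"
  unfolding arrival_def by simp

lemma st_range:
  assumes "x \<le> b" "\<forall>i. 0 \<le> snd (\<omega> i)" "st x \<omega> n = Some y"
  shows "0 \<le> y \<and> y \<le> b"
  using assms(3)
proof (induction n arbitrary: y)
  case 0 thus ?case using assms(1) b_nonneg by (auto split: if_splits)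
next
  case (Suc n)
  then obtain y' where y': "st x \<omega> n = Some y'" by (cases "st x \<omega> n") auto
  hence "0 \<le> y' \<and> y' \<le> b" using Suc by auto
  have "0 \<le> al * snd (\<omega> n)" using assms(2) al_pos by simp
  thus ?case using Suc.prems y' b_nonneg by (auto simp: Let_def post_claim_def split: if_splits)
qed

lemma trm_bound:
  assumes "x \<le> b" "nice \<omega>"
  shows "\<bar>trm x \<omega> n\<bar> \<le> (c/q + k*a) * exp(-q*arrival \<omega> n)"
proof (cases "st x \<omega> n")
  case None thus ?thesis unfolding trm_def using c_pos q_pos k_ge1 a_pos by simp
next
  case (Some y)
  have nn: "\<forall>i. 0 \<le> fst (\<omega> i)" "\<forall>i. 0 \<le> snd (\<omega> i)" using assms(2) unfolding nice_def by auto
  have y: "0 \<le> y" "y \<le> b" using st_range[OF assms(1) nn(2) Some] by auto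
  have A0: "0 \<le> arrival \<omega> n" by (rule arrival_nonneg[OF nn(1)])
  have d: "0 \<le> div_period c q b y (arrival \<omega> n) (fst (\<omega> n))"
          "div_period c q b y (arrival \<omega> n) (fst (\<omega> n)) \<le> c/q * exp(-q*arrival \<omega> n)"
    using div_bound[of y "fst (\<omega> n)" "arrival \<omega> n"] y nn A0 by auto
  define I where "I = injection a (post_claim al c b y (fst (\<omega> n)) (snd (\<omega> n)))"
  have I: "0 \<le> I" "I \<le> a" unfolding I_def injection_def using a_pos by auto
  have e: "exp (- q * arrival \<omega> (Suc n)) \<le> exp(-q*arrival \<omega> n)"
    using arrival_mono[OF nn(1), of n] q_pos by simp
  have "0 \<le> k * exp (- q * arrival \<omega> (Suc n)) * I" using I k_ge1 by simp
  moreover have "k * exp (- q * arrival \<omega> (Suc n)) * I \<le> k * exp(-q*arrival \<omega> n) * a"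
    using I e k_ge1 by (intro mult_mono) auto
  ultimately have "\<bar>div_period c q b y (arrival \<omega> n) (fst (\<omega> n)) - k * exp (- q * arrival \<omega> (Suc n)) * I\<bar>
     \<le> c/q * exp(-q*arrival \<omega> n) + k * exp(-q*arrival \<omega> n) * a" using d by linarith
  thus ?thesis unfolding trm_def Some I_def by (simp add: algebra_simps)
qed

lemma trm_summable:
  assumes "x \<le> b" "nice \<omega>"
  shows "summable (trm x \<omega>)"
proof (rule summable_comparison_test)
  show "\<exists>N. \<forall>n\<ge>N. norm (trm x \<omega> n) \<le> (c/q + k*a) * exp(-q*arrival \<omega> n)"
    using trm_bound[OF assms] by auto
  show "summable (\<lambda>n. (c/q + k*a) * exp(-q*arrival \<omega> n))"
    using assms(2) unfolding nice_def by (intro summable_mult) auto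
qed

definition "sumexp \<omega> = (\<Sum>n. exp(-q*arrival \<omega> n))"

lemma sumexp_meas[measurable]: "sumexp \<in> borel_measurable Om"
  unfolding sumexp_def[abs_def] by measurable

lemma payoff_bound:
  assumes "x \<le> b" "nice \<omega>"
  shows "\<bar>payoff al c q k a b x \<omega>\<bar> \<le> k*a + (c/q + k*a) * sumexp \<omega>"
proof -
  have sm: "summable (\<lambda>n. (c/q + k*a) * exp(-q*arrival \<omega> n))"
    using assms(2) unfolding nice_def by (intro summable_mult) auto
  have sa: "summable (\<lambda>n. norm (trm x \<omega> n))"
    by (rule summable_comparison_test[OF _ sm]) (use trm_bound[OF assms] in auto)
  have "\<bar>\<Sum>n. trm x \<omega> n\<bar> \<le> (\<Sum>n. norm (trm x \<omega> n))"
    using summable_norm[OF sa] by simp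
  also have "... \<le> (\<Sum>n. (c/q + k*a) * exp(-q*arrival \<omega> n))"
    by (rule suminf_le[OF _ sa sm]) (use trm_bound[OF assms] in auto)
  also have "... = (c/q + k*a) * sumexp \<omega>" unfolding sumexp_def
    using assms(2) unfolding nice_def by (intro suminf_mult) auto
  finally have s: "\<bar>\<Sum>n. trm x \<omega> n\<bar> \<le> (c/q + k*a) * sumexp \<omega>" .
  have "\<bar>init x\<bar> \<le> k*a"
  proof (cases "- a \<le> x \<and> x < 0")
    case True
    hence "k*(-x) \<le> k*a" using k_ge1 by (intro mult_left_mono) auto
    thus ?thesis unfolding init_def using True k_ge1 by (simp add: abs_mult)
  next
    case False
    hence "init x = 0" unfolding init_def by auto
    thus ?thesis using k_ge1 a_pos by simp
  qed
  thus ?thesis unfolding payoff_eq using s by linarith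
qed

end


context model begin

lemma Om_prob: "prob_space Om" by (rule SS.P.prob_space_axioms)
lemma Om_one: "measure Om (space Om) = 1" by (rule SS.P.prob_space)

definition "th = lam/(lam+q)"

lemma th_pos: "0 < th" and th_lt1: "th < 1"
  unfolding th_def using lam_pos q_pos by auto

lemma exp_MT: "has_bochner_integral MT (\<lambda>t. exp(-q*t)) th"
proof -
  have "has_bochner_integral lborel (\<lambda>t. lam * (indicator {0<..} t * exp(-(lam+q)*t))) (lam * (exp(-(lam+q)*0)/(lam+q)))"
    by (rule has_bochner_integral_mult_right[OF exp_tail]) (use lam_pos q_pos in simp)
  hence "has_bochner_integral lborel (\<lambda>t. lam * (indicator {0<..} t * exp(-(lam+q)*t))) th"
    unfolding th_def by simp
  moreover have "AE t in lborel. lam * (indicator {0<..} t * exp(-(lam+q)*t)) = exponential_density lam t *\<^sub>R exp(-q*t)"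
    using AE_lborel_singleton[of 0]
    by eventually_elim (auto simp: exponential_density_def indicator_def exp_add[symmetric] algebra_simps mult_exp_exp)
  ultimately have h: "has_bochner_integral lborel (\<lambda>t. exponential_density lam t *\<^sub>R exp(-q*t)) th"
    by (subst has_bochner_integral_cong_AE[symmetric]) auto
  have i: "integrable MT (\<lambda>t. exp(-q*t))"
    using h by (subst integrable_density) (auto simp: has_bochner_integral_iff lam_pos exponential_density_nonneg)
  have "(\<integral>t. exp(-q*t) \<partial>MT) = th"
    using h by (subst integral_density) (auto simp: has_bochner_integral_iff lam_pos exponential_density_nonneg)
  with i show ?thesis by (simp add: has_bochner_integral_iff)
qed

lemma nn_exp_M0: "(\<integral>\<^sup>+s. ennreal (exp(-q*fst s)) \<partial>M0) = ennreal th"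
proof -
  interpret pair_prob_space MT MU by (rule pair_M0)
  have "(\<integral>\<^sup>+s. ennreal (exp(-q*fst s)) \<partial>M0) = (\<integral>\<^sup>+t. \<integral>\<^sup>+u. ennreal (exp(-q*fst (t,u))) \<partial>MU \<partial>MT)"
    by (subst M2.nn_integral_fst) auto
  also have "... = (\<integral>\<^sup>+t. ennreal (exp(-q*t)) \<partial>MT)"
  proof -
    have "emeasure MU UNIV = 1" using M2.emeasure_space_1 by simp
    thus ?thesis by simp
  qed
  also have "... = ennreal th"
    using exp_MT by (subst nn_integral_eq_integral) (auto simp: has_bochner_integral_iff)
  finally show ?thesis .
qed

lemma exp_M0: "has_bochner_integral M0 (\<lambda>s. exp(-q*fst s)) th"
proof -
  have i: "integrable M0 (\<lambda>s. exp(-q*fst s))"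
    by (rule integrableI_nonneg) (auto simp: nn_exp_M0[simplified])
  have "ennreal (\<integral>s. exp(-q*fst s) \<partial>M0) = ennreal th"
    using nn_integral_eq_integral[OF i] nn_exp_M0 by simp
  hence "(\<integral>s. exp(-q*fst s) \<partial>M0) = th" using th_pos by (simp add: integral_nonneg_AE)
  with i show ?thesis by (simp add: has_bochner_integral_iff)
qed

lemma case_nat_meas[measurable]: "(\<lambda>(s, \<omega>). case_nat s \<omega>) \<in> measurable (M0 \<Otimes>\<^sub>M Om) Om"
  by measurable

lemma nn_iter:
  assumes [measurable]: "f \<in> borel_measurable Om"
  shows "(\<integral>\<^sup>+\<omega>. f \<omega> \<partial>Om) = (\<integral>\<^sup>+s. \<integral>\<^sup>+\<omega>. f (case_nat s \<omega>) \<partial>Om \<partial>M0)"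
proof -
  interpret P2: pair_prob_space M0 Om by (rule pair_M0_Om)
  have "(\<integral>\<^sup>+\<omega>. f \<omega> \<partial>Om) = (\<integral>\<^sup>+\<omega>. f \<omega> \<partial>distr (M0 \<Otimes>\<^sub>M Om) Om (\<lambda>(s, \<omega>). case_nat s \<omega>))"
    by (simp add: SS.PiM_iter)
  also have "... = (\<integral>\<^sup>+y. f (case_prod case_nat y) \<partial>(M0 \<Otimes>\<^sub>M Om))"
    by (subst nn_integral_distr) auto
  also have "... = (\<integral>\<^sup>+s. \<integral>\<^sup>+\<omega>. f (case_nat s \<omega>) \<partial>Om \<partial>M0)"
    by (subst sigma_finite_measure.nn_integral_fst[OF prob_space_imp_sigma_finite[OF Om_prob], symmetric]) auto
  finally show ?thesis .
qed

lemma nn_arr: "(\<integral>\<^sup>+\<omega>. ennreal (exp(-q*arrival \<omega> n)) \<partial>Om) = ennreal th ^ n"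
proof (induction n)
  case 0
  show ?case by (simp add: arrival_0 SS.emeasure_space_1)
next
  case (Suc n)
  have "(\<integral>\<^sup>+\<omega>. ennreal (exp(-q*arrival \<omega> (Suc n))) \<partial>Om)
      = (\<integral>\<^sup>+s. \<integral>\<^sup>+\<omega>. ennreal (exp(-q*arrival (case_nat s \<omega>) (Suc n))) \<partial>Om \<partial>M0)"
    by (rule nn_iter) measurable
  also have "... = (\<integral>\<^sup>+s. ennreal (exp(-q*fst s)) * (\<integral>\<^sup>+\<omega>. ennreal (exp(-q*arrival \<omega> n)) \<partial>Om) \<partial>M0)"
    unfolding arrival_shift
    by (subst nn_integral_cmult[symmetric]) (auto simp: ennreal_mult[symmetric] exp_add[symmetric] algebra_simps intro!: nn_integral_cong)
  also have "... = (\<integral>\<^sup>+s. ennreal (exp(-q*fst s)) \<partial>M0) * ennreal th ^ n"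
    unfolding Suc by (subst nn_integral_multc) auto
  also have "... = ennreal th * ennreal th ^ n" unfolding nn_exp_M0 ..
  finally show ?case by simp
qed

lemma geom_th: "(\<Sum>n. th ^ n) = 1/(1 - th)" and geom_sum: "summable (\<lambda>n. th ^ n)"
  using geometric_sums[of th] th_pos th_lt1 by (auto simp: sums_iff)

lemma nn_sumexp: "(\<integral>\<^sup>+\<omega>. (\<Sum>n. ennreal (exp(-q*arrival \<omega> n))) \<partial>Om) = ennreal (1/(1-th))"
proof -
  have "(\<integral>\<^sup>+\<omega>. (\<Sum>n. ennreal (exp(-q*arrival \<omega> n))) \<partial>Om) = (\<Sum>n. ennreal th ^ n)"
    by (subst nn_integral_suminf) (auto simp: nn_arr[simplified])
  also have "... = (\<Sum>n. ennreal (th ^ n))" using th_pos by (simp add: ennreal_power)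
  also have "... = ennreal (\<Sum>n. th ^ n)" using th_pos geom_sum by (intro suminf_ennreal2) auto
  finally show ?thesis unfolding geom_th .
qed

lemma AE_nice: "AE \<omega> in Om. nice \<omega>"
proof -
  have "AE \<omega> in Om. \<forall>n. 0 \<le> fst (\<omega> n) \<and> 0 \<le> snd (\<omega> n)"
  proof (rule AE_all_countable[THEN iffD2], rule allI)
    fix n
    show "AE \<omega> in Om. 0 \<le> fst (\<omega> n) \<and> 0 \<le> snd (\<omega> n)"
      using AE_PiM_component[of UNIV "\<lambda>_. M0" n "\<lambda>x. 0 \<le> fst x \<and> 0 \<le> snd x"] AE_M0 M0_prob by auto
  qed
  moreover have "AE \<omega> in Om. (\<Sum>n. ennreal (exp(-q*arrival \<omega> n))) \<noteq> \<infinity>"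
    by (rule nn_integral_PInf_AE) (auto simp: nn_sumexp[simplified])
  ultimately show ?thesis
  proof eventually_elim
    case (elim \<omega>)
    have "summable (\<lambda>n. exp(-q*arrival \<omega> n))"
      by (rule summable_suminf_not_top) (use elim in auto)
    thus ?case using elim unfolding nice_def by auto
  qed
qed

lemma sumexp_int: "has_bochner_integral Om sumexp (1/(1-th))"
proof -
  have ae: "AE \<omega> in Om. ennreal (sumexp \<omega>) = (\<Sum>n. ennreal (exp(-q*arrival \<omega> n)))"
    using AE_nice
  proof eventually_elim
    case (elim \<omega>)
    thus ?case unfolding sumexp_def nice_def by (subst suminf_ennreal2) auto
  qed
  have nn: "AE \<omega> in Om. 0 \<le> sumexp \<omega>"
    using AE_nice by eventually_elim (auto simp: sumexp_def nice_def intro!: suminf_nonneg)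
  have nnI: "(\<integral>\<^sup>+\<omega>. ennreal (sumexp \<omega>) \<partial>Om) = ennreal (1/(1-th))"
    using nn_integral_cong_AE[OF ae] nn_sumexp by simp
  have i: "integrable Om sumexp"
    using nn nnI by (intro integrableI_nonneg) auto
  have "ennreal (\<integral>\<omega>. sumexp \<omega> \<partial>Om) = ennreal (1/(1-th))"
    using nn_integral_eq_integral[OF i nn] nnI by simp
  hence "(\<integral>\<omega>. sumexp \<omega> \<partial>Om) = 1/(1-th)" using th_lt1 nn
    by (subst (asm) ennreal_inj) (auto simp: integral_nonneg_AE)
  with i show ?thesis by (simp add: has_bochner_integral_iff)
qed

definition "JB = k*a + (c/q + k*a) * (1/(1-th))"

lemma payoff_int:
  assumes "x \<le> b"
  shows "integrable Om (payoff al c q k a b x)"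
proof (rule Bochner_Integration.integrable_bound)
  show "integrable Om (\<lambda>\<omega>. k*a + (c/q + k*a) * sumexp \<omega>)"
    using sumexp_int Om_one by (auto simp: has_bochner_integral_iff)
  show "AE \<omega> in Om. norm (payoff al c q k a b x \<omega>) \<le> norm (k*a + (c/q + k*a) * sumexp \<omega>)"
    using AE_nice
  proof eventually_elim
    case (elim \<omega>)
    have "0 \<le> sumexp \<omega>" using elim unfolding sumexp_def nice_def by (auto intro!: suminf_nonneg)
    hence "0 \<le> k*a + (c/q + k*a) * sumexp \<omega>" using c_pos q_pos k_ge1 a_pos by simp
    thus ?case using payoff_bound[OF assms elim] by simp
  qed
qed simp

lemma J_eq: "J al c lam mu q k a b x = (\<integral>\<omega>. payoff al c q k a b x \<omega> \<partial>Om)"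
  unfolding J_def claim_space_eq ..

lemma J_bound:
  assumes "x \<le> b"
  shows "\<bar>J al c lam mu q k a b x\<bar> \<le> JB"
proof -
  have gi: "integrable Om (\<lambda>\<omega>. k*a + (c/q + k*a) * sumexp \<omega>)"
    using sumexp_int Om_one by (auto simp: has_bochner_integral_iff)
  have gv: "(\<integral>\<omega>. k*a + (c/q + k*a) * sumexp \<omega> \<partial>Om) = JB"
    using sumexp_int unfolding JB_def by (auto simp: has_bochner_integral_iff Om_one)
  have "\<bar>J al c lam mu q k a b x\<bar> \<le> (\<integral>\<omega>. \<bar>payoff al c q k a b x \<omega>\<bar> \<partial>Om)"
    unfolding J_eq using integral_abs_bound .
  also have "... \<le> (\<integral>\<omega>. k*a + (c/q + k*a) * sumexp \<omega> \<partial>Om)"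
  proof (rule integral_mono_AE)
    show "integrable Om (\<lambda>\<omega>. \<bar>payoff al c q k a b x \<omega>\<bar>)" using payoff_int[OF assms] by simp
    show "AE \<omega> in Om. \<bar>payoff al c q k a b x \<omega>\<bar> \<le> k*a + (c/q + k*a) * sumexp \<omega>"
      using AE_nice by eventually_elim (rule payoff_bound[OF assms])
  qed (rule gi)
  finally show ?thesis unfolding gv .
qed

lemma st_below: "x < -a \<Longrightarrow> st x \<omega> n = None"
  by (induction n) auto

lemma J_below: "x < -a \<Longrightarrow> J al c lam mu q k a b x = 0"
proof -
  assume x: "x < -a"
  have "payoff al c q k a b x = (\<lambda>\<omega>. 0)"
    unfolding payoff_eq[abs_def] init_def trm_def using x st_below[OF x] by simp
  thus ?thesis unfolding J_eq by simp
qed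

lemma st_mid: "-a \<le> x \<Longrightarrow> x \<le> 0 \<Longrightarrow> st x \<omega> n = st 0 \<omega> n"
  by (induction n) (auto simp: Let_def)

lemma J_mid:
  assumes "-a \<le> x" "x \<le> 0"
  shows "J al c lam mu q k a b x = k*x + J al c lam mu q k a b 0"
proof -
  have "init x = k*x" unfolding init_def using assms by auto
  moreover have "init 0 = 0" unfolding init_def by simp
  ultimately have "payoff al c q k a b x = (\<lambda>\<omega>. k*x + payoff al c q k a b 0 \<omega>)"
    unfolding payoff_eq[abs_def] trm_def st_mid[OF assms] by simp
  hence "J al c lam mu q k a b x = (\<integral>\<omega>. k*x + payoff al c q k a b 0 \<omega> \<partial>Om)" unfolding J_eq by simp
  also have "... = k*x + J al c lam mu q k a b 0"
    unfolding J_eq using payoff_int[OF b_nonneg]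
    by (simp add: Bochner_Integration.integral_add Om_one)
  finally show ?thesis .
qed

end


context model begin

lemma gen_meas:
  assumes X[measurable]: "X \<in> borel_measurable N" and W[measurable]: "W \<in> measurable N Om"
  shows "Measurable.pred N (\<lambda>y. st (X y) (W y) n \<noteq> None) \<and> (\<lambda>y. sval (X y) (W y) n) \<in> borel_measurable N"
proof (induction n)
  case 0
  have e: "(\<lambda>y. sval (X y) (W y) 0) = (\<lambda>y. if X y < -a then 0 else max 0 (X y))"
    by (rule ext) (simp add: sval_def)
  show ?case unfolding e by (simp; measurable)
next
  case (Suc n)
  have [measurable]: "(\<lambda>y. fst (W y i)) \<in> borel_measurable N" "(\<lambda>y. snd (W y i)) \<in> borel_measurable N" for i
    using measurable_compose[OF W fst_meas] measurable_compose[OF W snd_meas] by auto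
  from Suc have [measurable]: "Measurable.pred N (\<lambda>y. st (X y) (W y) n \<noteq> None)"
    "(\<lambda>y. sval (X y) (W y) n) \<in> borel_measurable N" by auto
  show ?case unfolding st_Suc_None sval_Suc post_claim_def by (intro conjI; measurable)
qed

lemma payoff_gen_meas:
  assumes X[measurable]: "X \<in> borel_measurable N" and W[measurable]: "W \<in> measurable N Om"
  shows "(\<lambda>y. payoff al c q k a b (X y) (W y)) \<in> borel_measurable N"
proof -
  have [measurable]: "(\<lambda>y. fst (W y i)) \<in> borel_measurable N" "(\<lambda>y. snd (W y i)) \<in> borel_measurable N"
    "(\<lambda>y. arrival (W y) i) \<in> borel_measurable N" for i
    using measurable_compose[OF W fst_meas] measurable_compose[OF W snd_meas]
      measurable_compose[OF W arrival_meas] by auto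
  have [measurable]: "Measurable.pred N (\<lambda>y. st (X y) (W y) n \<noteq> None)"
    "(\<lambda>y. sval (X y) (W y) n) \<in> borel_measurable N" for n using gen_meas[OF X W] by auto
  have [measurable]: "(\<lambda>y. trm (X y) (W y) n) \<in> borel_measurable N" for n
    unfolding trm_alt post_claim_def by measurable
  show ?thesis unfolding payoff_eq init_def by measurable
qed

abbreviation "JJ \<equiv> J al c lam mu q k a b"

lemma JJ_meas[measurable]: "JJ \<in> borel_measurable borel"
proof -
  have "case_prod (\<lambda>z \<omega>. payoff al c q k a b z \<omega>) \<in> borel_measurable (borel \<Otimes>\<^sub>M Om)"
    using payoff_gen_meas[of fst "borel \<Otimes>\<^sub>M Om" snd] by (simp add: case_prod_beta')
  hence "(\<lambda>z. \<integral>\<omega>. payoff al c q k a b z \<omega> \<partial>Om) \<in> borel_measurable borel"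
    by (rule sigma_finite_measure.borel_measurable_lebesgue_integral[OF prob_space_imp_sigma_finite[OF Om_prob]])
  thus ?thesis unfolding J_eq[abs_def] .
qed

lemma post_le: "0 \<le> u \<Longrightarrow> y \<le> b \<Longrightarrow> post_claim al c b y t u \<le> b"
  unfolding post_claim_def using al_pos by (smt (verit) mult_nonneg_nonneg)

lemma J_decomp:
  assumes x: "0 \<le> x" "x \<le> b"
  shows "integrable M0 (\<lambda>s. div_period c q b x 0 (fst s) + exp(-q*fst s) * JJ (post_claim al c b x (fst s) (snd s)))"
    and "JJ x = (\<integral>s. div_period c q b x 0 (fst s) + exp(-q*fst s) * JJ (post_claim al c b x (fst s) (snd s)) \<partial>M0)"
proof -
  interpret P2: pair_prob_space M0 Om by (rule pair_M0_Om)
  let ?f = "payoff al c q k a b x"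
  let ?g = "\<lambda>(s, \<omega>). ?f (case_nat s \<omega>)"
  let ?h = "\<lambda>(s, \<omega>). div_period c q b x 0 (fst s) + exp(-q*fst s) * payoff al c q k a b (post_claim al c b x (fst s) (snd s)) \<omega>"
  have fi: "integrable Om ?f" by (rule payoff_int[OF x(2)])
  have gi: "integrable (M0 \<Otimes>\<^sub>M Om) ?g"
    using fi by (subst (asm) SS.PiM_iter[symmetric]) (simp add: integrable_distr_eq split_beta')
  have gv: "JJ x = (\<integral>y. ?g y \<partial>(M0 \<Otimes>\<^sub>M Om))"
    unfolding J_eq by (subst SS.PiM_iter[symmetric]) (simp add: integral_distr split_beta')
  have aen: "AE y in M0 \<Otimes>\<^sub>M Om. nice (case_prod case_nat y)"
    using AE_nice by (subst (asm) SS.PiM_iter[symmetric]) (rule AE_distrD[OF case_nat_meas])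
  have hmeas: "?h \<in> borel_measurable (M0 \<Otimes>\<^sub>M Om)"
  proof -
    have "(\<lambda>y. payoff al c q k a b (post_claim al c b x (fst (fst y)) (snd (fst y))) (snd y)) \<in> borel_measurable (M0 \<Otimes>\<^sub>M Om)"
      by (rule payoff_gen_meas) (auto simp: post_claim_def)
    thus ?thesis by (simp add: split_beta')
  qed
  have gh: "AE y in M0 \<Otimes>\<^sub>M Om. ?g y = ?h y"
    using aen
  proof eventually_elim
    case (elim y)
    obtain s \<omega> where y: "y = (s, \<omega>)" by (cases y)
    have n: "0 \<le> fst s" "0 \<le> snd s" "nice \<omega>" using nice_shift elim y by auto
    have zb: "post_claim al c b x (fst s) (snd s) \<le> b" using post_le n x by auto
    have sm: "summable (trm (post_claim al c b (max 0 x) (fst s) (snd s)) \<omega>)"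
      using trm_summable[OF zb n(3)] x by simp
    have "init x = 0" unfolding init_def using x by simp
    thus ?case using payoff_shift[OF _ sm] x a_pos y by simp
  qed
  have hi: "integrable (M0 \<Otimes>\<^sub>M Om) ?h"
    using gi gh hmeas by (subst integrable_cong_AE[symmetric]) auto
  have hv: "JJ x = (\<integral>y. ?h y \<partial>(M0 \<Otimes>\<^sub>M Om))"
    unfolding gv using gh gi hmeas by (intro integral_cong_AE) auto
  have inner: "AE s in M0. (\<integral>\<omega>. ?h (s, \<omega>) \<partial>Om) = div_period c q b x 0 (fst s) + exp(-q*fst s) * JJ (post_claim al c b x (fst s) (snd s))"
    using AE_M0
  proof eventually_elim
    case (elim s)
    have zb: "post_claim al c b x (fst s) (snd s) \<le> b" using post_le elim x by auto
    show ?case using payoff_int[OF zb] unfolding J_eq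
      by (simp add: Bochner_Integration.integral_add Om_one)
  qed
  have m1: "(\<lambda>s. \<integral>\<omega>. ?h (s, \<omega>) \<partial>Om) \<in> borel_measurable M0"
    using hmeas by (intro sigma_finite_measure.borel_measurable_lebesgue_integral[OF prob_space_imp_sigma_finite[OF Om_prob]]) (simp add: split_beta')
  have m2: "(\<lambda>s. div_period c q b x 0 (fst s) + exp(-q*fst s) * JJ (post_claim al c b x (fst s) (snd s))) \<in> borel_measurable M0"
    unfolding post_claim_def by measurable
  show "integrable M0 (\<lambda>s. div_period c q b x 0 (fst s) + exp(-q*fst s) * JJ (post_claim al c b x (fst s) (snd s)))"
    using P2.integrable_fst'[OF hi] inner m1 m2 by (subst integrable_cong_AE[symmetric]) auto
  show "JJ x = (\<integral>s. div_period c q b x 0 (fst s) + exp(-q*fst s) * JJ (post_claim al c b x (fst s) (snd s)) \<partial>M0)"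
    unfolding hv P2.integral_fst'[OF hi, symmetric] using inner m1 m2 by (intro integral_cong_AE) auto
qed

end


context model begin

lemma F_int:
  assumes x: "0 \<le> x" "x \<le> b"
  shows "integrable M0 (\<lambda>s. div_period c q b x 0 (fst s) + exp(-q*fst s) * Ft (post_claim al c b x (fst s) (snd s)))"
proof -
  let ?f = "\<lambda>s. div_period c q b x 0 (fst s) + exp(-q*fst s) * Ft (post_claim al c b x (fst s) (snd s))"
  have meas: "?f \<in> borel_measurable M0" unfolding post_claim_def by measurable
  show "integrable M0 ?f"
  proof (rule SS.M.integrable_const_bound[where B="c/q + FtB"])
    show "AE s in M0. norm (?f s) \<le> c/q + FtB"
      using AE_M0
    proof eventually_elim
      case (elim s)
      have "0 \<le> div_period c q b x 0 (fst s)" "div_period c q b x 0 (fst s) \<le> c/q"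
        using div_bound[of x "fst s" 0] x elim by auto
      moreover have "\<bar>exp(-q*fst s) * Ft (post_claim al c b x (fst s) (snd s))\<bar> \<le> FtB"
      proof -
        have "exp(-q*fst s) \<le> 1" using elim q_pos by simp
        hence "\<bar>exp(-q*fst s)\<bar> * \<bar>Ft (post_claim al c b x (fst s) (snd s))\<bar> \<le> 1 * FtB"
          using Ft_bound by (intro mult_mono) auto
        thus ?thesis by (simp add: abs_mult)
      qed
      ultimately show ?case by simp
    qed
  qed (rule meas)
qed

lemma step:
  assumes Mn: "\<And>y. 0 \<le> y \<Longrightarrow> y \<le> b \<Longrightarrow> \<bar>JJ y - Fc y\<bar> \<le> Mn" and x: "0 \<le> x" "x \<le> b"
  shows "\<bar>JJ x - Fc x\<bar> \<le> th * Mn"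
proof -
  have Mn0: "0 \<le> Mn" using Mn[of 0] b_nonneg by auto
  let ?A = "\<lambda>s. div_period c q b x 0 (fst s) + exp(-q*fst s) * JJ (post_claim al c b x (fst s) (snd s))"
  let ?B = "\<lambda>s. div_period c q b x 0 (fst s) + exp(-q*fst s) * Ft (post_claim al c b x (fst s) (snd s))"
  let ?D = "\<lambda>s. exp(-q*fst s) * (JJ (post_claim al c b x (fst s) (snd s)) - Ft (post_claim al c b x (fst s) (snd s)))"
  have Ai: "integrable M0 ?A" by (rule J_decomp(1)[OF x])
  have Bi: "integrable M0 ?B" by (rule F_int[OF x])
  have Di: "integrable M0 ?D"
  proof -
    have i: "integrable M0 (\<lambda>s. ?A s - ?B s)" by (rule Bochner_Integration.integrable_diff[OF Ai Bi])
    have e: "(\<lambda>s. ?A s - ?B s) = ?D" by (rule ext) (simp add: algebra_simps)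
    show ?thesis using i unfolding e .
  qed
  have "JJ x - Fc x = (\<integral>s. ?A s \<partial>M0) - (\<integral>s. ?B s \<partial>M0)"
    using J_decomp(2)[OF x] F_fixed[OF x] by simp
  also have "... = (\<integral>s. ?A s - ?B s \<partial>M0)" by (rule Bochner_Integration.integral_diff[OF Ai Bi, symmetric])
  also have "... = (\<integral>s. ?D s \<partial>M0)" by (rule Bochner_Integration.integral_cong) (simp_all add: algebra_simps)
  finally have eq: "JJ x - Fc x = (\<integral>s. ?D s \<partial>M0)" .
  have "\<bar>JJ x - Fc x\<bar> \<le> (\<integral>s. \<bar>?D s\<bar> \<partial>M0)" unfolding eq by (rule integral_abs_bound)
  also have "... \<le> (\<integral>s. exp(-q*fst s) * Mn \<partial>M0)"
  proof (rule integral_mono_AE)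
    show "integrable M0 (\<lambda>s. \<bar>?D s\<bar>)" using Di by simp
    show "integrable M0 (\<lambda>s. exp(-q*fst s) * Mn)" using exp_M0 by (simp add: has_bochner_integral_iff)
    show "AE s in M0. \<bar>?D s\<bar> \<le> exp(-q*fst s) * Mn"
      using AE_M0
    proof eventually_elim
      case (elim s)
      define z where "z = post_claim al c b x (fst s) (snd s)"
      have zb: "z \<le> b" unfolding z_def using post_le elim x by auto
      have "\<bar>JJ z - Ft z\<bar> \<le> Mn"
      proof (cases "z < -a")
        case True thus ?thesis using J_below[OF True] Mn0 unfolding Ft_def by simp
      next
        case False
        show ?thesis
        proof (cases "z < 0")
          case True
          have "JJ z - Ft z = JJ 0 - Fc 0" unfolding Ft_def Fc0 using J_mid[of z] False True by simp
          thus ?thesis using Mn[of 0] b_nonneg by simp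
        next
          case z0: False
          have "Ft z = Fc z" unfolding Ft_def using False z0 zb by simp
          thus ?thesis using Mn[of z] z0 zb by simp
        qed
      qed
      hence "exp(-q*fst s) * \<bar>JJ z - Ft z\<bar> \<le> exp(-q*fst s) * Mn" by simp
      thus ?case unfolding z_def[symmetric] by (simp add: abs_mult)
    qed
  qed
  also have "... = th * Mn" using exp_M0 by (simp add: has_bochner_integral_iff)
  finally show ?thesis .
qed

lemma JJ_Fc:
  assumes x: "0 \<le> x" "x \<le> b"
  shows "JJ x = Fc x"
proof -
  define M where "M = JB + (\<bar>KP\<bar>*exp(P*b) + \<bar>KR\<bar>)"
  have all: "\<forall>y. 0 \<le> y \<and> y \<le> b \<longrightarrow> \<bar>JJ y - Fc y\<bar> \<le> th^n * M" for n
  proof (induction n)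
    case 0
    show ?case
    proof (intro allI impI)
      fix y assume y: "0 \<le> y \<and> y \<le> b"
      have "\<bar>JJ y - Fc y\<bar> \<le> \<bar>JJ y\<bar> + \<bar>Fc y\<bar>" by (rule abs_triangle_ineq4)
      also have "... \<le> JB + (\<bar>KP\<bar>*exp(P*b) + \<bar>KR\<bar>)" using J_bound[of y] Fc_bound[of y] y by (intro add_mono) auto
      finally show "\<bar>JJ y - Fc y\<bar> \<le> th^0 * M" unfolding M_def by simp
    qed
  next
    case (Suc n)
    show ?case
    proof (intro allI impI)
      fix y assume y: "0 \<le> y \<and> y \<le> b"
      have "\<bar>JJ y - Fc y\<bar> \<le> th * (th^n * M)" using Suc y by (intro step) auto
      thus "\<bar>JJ y - Fc y\<bar> \<le> th^Suc n * M" by (simp add: mult.assoc)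
    qed
  qed
  have lim: "(\<lambda>n. th^n * M) \<longlonglongrightarrow> 0"
    using LIMSEQ_power_zero[of th] th_pos th_lt1 by (intro tendsto_mult_left_zero) auto
  have "\<bar>JJ x - Fc x\<bar> \<le> 0"
    by (rule LIMSEQ_le_const[OF lim]) (use all x in auto)
  thus ?thesis by simp
qed


lemma C_deriv: "(Cq al c lam mu q has_real_derivative Cp) (at_right b)"
proof -
  have "((\<lambda>y. c * Wq al c lam mu q y - Zq al c lam mu q y) has_real_derivative c * dW b - q * Wq al c lam mu q b) (at_right b)"
    by (intro DERIV_diff DERIV_cmult W_deriv Z_deriv)
  thus ?thesis unfolding Cq_def[abs_def] Cp_def .
qed

lemma G_deriv: "((\<lambda>y. Gfun al c lam mu q a y) has_real_derivative mm * Cp) (at_right b)"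
  unfolding Gfun_def mm_def[symmetric] by (intro DERIV_cmult C_deriv)

lemma S_deriv: "((\<lambda>y. Sfun al c lam mu q a y) has_real_derivative e0 * Cp + q * Wq al c lam mu q b) (at_right b)"
  unfolding Sfun_def e0_def[symmetric] by (intro DERIV_add DERIV_cmult C_deriv Z_deriv)

end

theorem proposition4p2:
  fixes al c lam mu q k a b :: real
  assumes "0 < al" "al \<le> 1" "0 < lam" "0 < mu" "0 < q" "0 < c" "1 \<le> k" "0 < a" "0 \<le> b"
  defines "W \<equiv> Wq al c lam mu q" and "Z \<equiv> Zq al c lam mu q" and "C \<equiv> Cq al c lam mu q"
      and "JJ \<equiv> J al c lam mu q k a b"
      and "z \<equiv> zfun al mu k a (J al c lam mu q k a b 0)"
  shows
    "(\<forall>x. 0 \<le> x \<and> x \<le> b \<longrightarrow>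
        JJ x = W x / W b * JJ b + (Z x - W x / W b * Z b) * z)
     \<and> (\<forall>x. 0 \<le> x \<and> x \<le> b \<longrightarrow>
        JJ x - z * Z x = W x / W b * (JJ b - z * Z b))
     \<and> (\<forall>x. x < - a \<longrightarrow> JJ x = 0)
     \<and> (\<forall>x. - a \<le> x \<and> x \<le> 0 \<longrightarrow> JJ x = k * x + JJ 0)
     \<and> (\<forall>x. 0 < x \<and> x \<le> b \<longrightarrow>
        JJ x = k * Gfun al c lam mu q a x + JJ 0 * Sfun al c lam mu q a x)
     \<and> (\<exists>G' S' C'.
          ((\<lambda>y. Gfun al c lam mu q a y) has_real_derivative G') (at_right b)
        \<and> ((\<lambda>y. Sfun al c lam mu q a y) has_real_derivative S') (at_right b)
        \<and> (C has_real_derivative C') (at_right b)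
        \<and> JJ 0 = (1 - k * G') / S'
        \<and> JJ 0 = (1 - k * m_al al mu a * C') / (exp (- (mu / al) * a) * C' + q * W b))"
proof -
  interpret model al c lam mu q k a b
    using assms(1-9) by unfold_locales auto
  have JF: "JJ x = Fc x" if "0 \<le> x" "x \<le> b" for x
    unfolding JJ_def using JJ_Fc that by simp
  have J0: "JJ 0 = F0" using JF[of 0] b_nonneg Fc0 by simp
  have zv: "z = zz" unfolding z_def zz_zfun using J0 unfolding JJ_def by simp
  have Wb: "0 < W b" unfolding W_def using W_pos b_nonneg by simp
  have FA: "JJ x = Aco * W x + zz * Z x" if "0 \<le> x" "x \<le> b" for x
    unfolding JF[OF that] Fc_AZ W_def Z_def Z_eq[OF that(1)] ..
  have p1: "\<forall>x. 0 \<le> x \<and> x \<le> b \<longrightarrow> JJ x = W x / W b * JJ b + (Z x - W x / W b * Z b) * z"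
  proof (intro allI impI)
    fix x assume x: "0 \<le> x \<and> x \<le> b"
    have fx: "JJ x = Aco * W x + zz * Z x" using FA x by auto
    have fb: "JJ b = Aco * W b + zz * Z b" using FA b_nonneg by auto
    show "JJ x = W x / W b * JJ b + (Z x - W x / W b * Z b) * z"
      unfolding fx fb zv using Wb by (simp add: field_simps)
  qed
  have p2: "\<forall>x. 0 \<le> x \<and> x \<le> b \<longrightarrow> JJ x - z * Z x = W x / W b * (JJ b - z * Z b)"
  proof (intro allI impI)
    fix x assume x: "0 \<le> x \<and> x \<le> b"
    have fx: "JJ x = Aco * W x + zz * Z x" using FA x by auto
    have fb: "JJ b = Aco * W b + zz * Z b" using FA b_nonneg by auto
    show "JJ x - z * Z x = W x / W b * (JJ b - z * Z b)"
      unfolding fx fb zv using Wb by (simp add: field_simps)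
  qed
  have p3: "\<forall>x. x < - a \<longrightarrow> JJ x = 0" unfolding JJ_def using J_below by blast
  have p4: "\<forall>x. - a \<le> x \<and> x \<le> 0 \<longrightarrow> JJ x = k * x + JJ 0"
  proof (intro allI impI)
    fix x assume "- a \<le> x \<and> x \<le> 0"
    thus "JJ x = k * x + JJ 0" unfolding JJ_def using J_mid[of x] by blast
  qed
  have p5: "\<forall>x. 0 < x \<and> x \<le> b \<longrightarrow> JJ x = k * Gfun al c lam mu q a x + JJ 0 * Sfun al c lam mu q a x"
  proof (intro allI impI)
    fix x assume x: "0 < x \<and> x \<le> b"
    have "JJ x = Fc x" using JF x by auto
    also have "... = k * Gfun al c lam mu q a x + F0 * Sfun al c lam mu q a x" using Fc_GS[of x] x by simp
    finally show "JJ x = k * Gfun al c lam mu q a x + JJ 0 * Sfun al c lam mu q a x" unfolding J0 .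
  qed
  have p6: "\<exists>G' S' C'.
          ((\<lambda>y. Gfun al c lam mu q a y) has_real_derivative G') (at_right b)
        \<and> ((\<lambda>y. Sfun al c lam mu q a y) has_real_derivative S') (at_right b)
        \<and> (C has_real_derivative C') (at_right b)
        \<and> JJ 0 = (1 - k * G') / S'
        \<and> JJ 0 = (1 - k * m_al al mu a * C') / (exp (- (mu / al) * a) * C' + q * W b)"
  proof (intro exI conjI)
    show "((\<lambda>y. Gfun al c lam mu q a y) has_real_derivative mm * Cp) (at_right b)" by (rule G_deriv)
    show "((\<lambda>y. Sfun al c lam mu q a y) has_real_derivative e0 * Cp + q * Wq al c lam mu q b) (at_right b)" by (rule S_deriv)
    show "(C has_real_derivative Cp) (at_right b)" unfolding C_def by (rule C_deriv)
    show "JJ 0 = (1 - k * (mm * Cp)) / (e0 * Cp + q * Wq al c lam mu q b)"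
      unfolding J0 F0_def den_def by (simp add: mult.assoc)
    show "JJ 0 = (1 - k * m_al al mu a * Cp) / (exp (- (mu / al) * a) * Cp + q * W b)"
      unfolding J0 F0_def den_def mm_def e0_def W_def by simp
  qed
  show ?thesis using p1 p2 p3 p4 p5 p6 by blast
qed


end
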